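(* Let $X$ be a complete CAT(0)-space with base point $x_0$, and let $g$ be an isometry of $X$ with $d_g:=\inf_{x\in X}d(x,gx)>0$. Then $g$ fixes a point $\gamma$ of the visual boundary of $X$. The metric functional corresponding to this point is fixed by $g$ and is the Busemann function $h=b_\gamma$ of the geodesic ray $\gamma$ from $x_0$ representing this boundary point. Moreover $h$ is the unique horofunction such that \[ h(gx)=h(x)-d_{g}\quad\text{for all }x\in X, \] and \[ \frac{1}{n}d(g^{n}x_{0},\gamma(d_{g}n))\rightarrow0\quad(n\to\infty). \]
   Context: The visual bordification of $X$ is $X$ together with the set of equivalence classes of geodesic rays (two rays equivalent if at bounded distance); isometries act on it naturally. For a geodesic ray $\gamma$ with $\gamma(0)=x_0$, its Busemann function is $b_\gamma(y)=\lim_{t\to\infty}(d(y,\gamma(t))-t)$. Metric functionals: with $\mathrm{Hom}(X,\mathbb{R})$ the $1$-Lipschitz functions with pointwise convergence topology and $h_y(\cdot)=d(\cdot,y)-d(x_0,y)$, they are the elements of the closure of $\{h_y\}$; an isometry $g$ acts on them by $(gh)(x)=h(g^{-1}x)-h(g^{-1}x_0)$. A horofunction is a limit of functions $h_{y_n}$ with respect to uniform convergence on bounded sets. *)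

theory Defs
  imports "HOL-Analysis.Analysis"
begin

definition geodesic_segment :: "(real \<Rightarrow> 'a::metric_space) \<Rightarrow> 'a \<Rightarrow> 'a \<Rightarrow> bool" where
  "geodesic_segment c x y \<longleftrightarrow>
     c 0 = x \<and> c (dist x y) = y \<and>
     (\<forall>s\<in>{0..dist x y}. \<forall>t\<in>{0..dist x y}. dist (c s) (c t) = \<bar>s - t\<bar>)"

definition geodesic_space :: "'a::metric_space itself \<Rightarrow> bool" where
  "geodesic_space _ \<longleftrightarrow> (\<forall>x y::'a. \<exists>c. geodesic_segment c x y)"

text \<open>Squared distance, in the Euclidean comparison triangle for a triangle with side
  lengths a = d(x,y), b = d(x,z), e = d(y,z), between the comparison points of the point at
  distance s from x on [x,y] and the point at distance t from x on [x,z] (law of cosines).\<close>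
definition comparison_dist_sq :: "real \<Rightarrow> real \<Rightarrow> real \<Rightarrow> real \<Rightarrow> real \<Rightarrow> real" where
  "comparison_dist_sq a b e s t = s\<^sup>2 + t\<^sup>2 - s * t * (a\<^sup>2 + b\<^sup>2 - e\<^sup>2) / (a * b)"

text \<open>CAT(0): geodesic, and every geodesic triangle is no fatter than its Euclidean comparison
  triangle (any two points of a triangle lie on two sides sharing a vertex, or on one side).\<close>
definition CAT0 :: "'a::metric_space itself \<Rightarrow> bool" where
  "CAT0 T \<longleftrightarrow> geodesic_space T \<and>
     (\<forall>(x::'a) y z c1 c2 s t. geodesic_segment c1 x y \<longrightarrow> geodesic_segment c2 x z \<longrightarrow>
        s \<in> {0..dist x y} \<longrightarrow> t \<in> {0..dist x z} \<longrightarrow>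
        (dist (c1 s) (c2 t))\<^sup>2 \<le> comparison_dist_sq (dist x y) (dist x z) (dist y z) s t)"

definition geodesic_ray :: "(real \<Rightarrow> 'a::metric_space) \<Rightarrow> bool" where
  "geodesic_ray \<gamma> \<longleftrightarrow> (\<forall>s\<ge>0. \<forall>t\<ge>0. dist (\<gamma> s) (\<gamma> t) = \<bar>s - t\<bar>)"

definition asymptotic :: "(real \<Rightarrow> 'a::metric_space) \<Rightarrow> (real \<Rightarrow> 'a) \<Rightarrow> bool" where
  "asymptotic \<gamma> \<delta> \<longleftrightarrow> (\<exists>C. \<forall>t\<ge>0. dist (\<gamma> t) (\<delta> t) \<le> C)"

definition visual_boundary :: "'a::metric_space itself \<Rightarrow> (real \<Rightarrow> 'a) set set" where
  "visual_boundary _ = {{\<delta>. geodesic_ray \<delta> \<and> asymptotic \<delta> \<gamma>} | \<gamma>. geodesic_ray \<gamma>}"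

definition isometry :: "('a::metric_space \<Rightarrow> 'a) \<Rightarrow> bool" where
  "isometry g \<longleftrightarrow> bij g \<and> (\<forall>x y. dist (g x) (g y) = dist x y)"

definition boundary_action :: "('a::metric_space \<Rightarrow> 'a) \<Rightarrow> (real \<Rightarrow> 'a) set \<Rightarrow> (real \<Rightarrow> 'a) set" where
  "boundary_action g \<xi> = (\<lambda>\<gamma>. g \<circ> \<gamma>) ` \<xi>"

definition busemann :: "(real \<Rightarrow> 'a::metric_space) \<Rightarrow> 'a \<Rightarrow> real" where
  "busemann \<gamma> y = Lim at_top (\<lambda>t. dist y (\<gamma> t) - t)"

definition translation_length :: "('a::metric_space \<Rightarrow> 'a) \<Rightarrow> real" where
  "translation_length g = (INF x. dist x (g x))"

definition hfun :: "'a::metric_space \<Rightarrow> 'a \<Rightarrow> 'a \<Rightarrow> real" where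
  "hfun x0 y = (\<lambda>x. dist x y - dist x0 y)"

text \<open>Metric functionals: closure of the h_y in Hom(X,R) (1-Lipschitz functions, topology of
  pointwise convergence = product topology on the function type).\<close>
definition metric_functional :: "'a::metric_space \<Rightarrow> ('a \<Rightarrow> real) \<Rightarrow> bool" where
  "metric_functional x0 h \<longleftrightarrow>
     (\<forall>x y. \<bar>h x - h y\<bar> \<le> dist x y) \<and> h \<in> closure (range (hfun x0))"

definition functional_action :: "'a::metric_space \<Rightarrow> ('a \<Rightarrow> 'a) \<Rightarrow> ('a \<Rightarrow> real) \<Rightarrow> ('a \<Rightarrow> real)" where
  "functional_action x0 g h = (\<lambda>x. h (inv g x) - h (inv g x0))"

definition horofunction :: "'a::metric_space \<Rightarrow> ('a \<Rightarrow> real) \<Rightarrow> bool" where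
  "horofunction x0 h \<longleftrightarrow>
     (\<exists>y :: nat \<Rightarrow> 'a. \<forall>B. bounded B \<longrightarrow> uniform_limit B (\<lambda>n. hfun x0 (y n)) h sequentially)"

end

theory Submission
  imports Defs
begin

lemma CAT0_geod: assumes "CAT0 TYPE('a::metric_space)" shows "\<exists>c. geodesic_segment c (x::'a) y"
  using assms unfolding CAT0_def geodesic_space_def by blast

lemma CAT0_cmp:
  assumes "CAT0 TYPE('a::metric_space)" "geodesic_segment c1 (x::'a) y" "geodesic_segment c2 x z"
    "0 \<le> s" "s \<le> dist x y" "0 \<le> t" "t \<le> dist x z"
  shows "(dist (c1 s) (c2 t))\<^sup>2 \<le> comparison_dist_sq (dist x y) (dist x z) (dist y z) s t"
  using assms unfolding CAT0_def by auto

lemma gs_start: "geodesic_segment c x y \<Longrightarrow> c 0 = x"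
  unfolding geodesic_segment_def by auto
lemma gs_end: "geodesic_segment c x y \<Longrightarrow> c (dist x y) = y"
  unfolding geodesic_segment_def by auto
lemma gs_dist: "geodesic_segment c x y \<Longrightarrow> 0 \<le> s \<Longrightarrow> s \<le> dist x y \<Longrightarrow> 0 \<le> t \<Longrightarrow> t \<le> dist x y
   \<Longrightarrow> dist (c s) (c t) = \<bar>s - t\<bar>"
  unfolding geodesic_segment_def by auto
lemma gs_dist_start: "geodesic_segment c x y \<Longrightarrow> 0 \<le> s \<Longrightarrow> s \<le> dist x y \<Longrightarrow> dist x (c s) = s"
  using gs_dist[of c x y 0 s] gs_start[of c x y] by auto
lemma gs_dist_end: "geodesic_segment c x y \<Longrightarrow> 0 \<le> s \<Longrightarrow> s \<le> dist x y \<Longrightarrow> dist (c s) y = dist x y - s"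
  using gs_dist[of c x y s "dist x y"] gs_end[of c x y] by auto

lemma gs_rev: assumes "geodesic_segment c x y" shows "geodesic_segment (\<lambda>s. c (dist x y - s)) y x"
  using assms unfolding geodesic_segment_def by (auto simp: dist_commute)

lemma gs_iso: assumes "geodesic_segment c x y" "\<And>a b. dist (h a) (h b) = dist a b"
  shows "geodesic_segment (h \<circ> c) (h x) (h y)"
  using assms unfolding geodesic_segment_def by auto

lemma gs_const: "geodesic_segment (\<lambda>_. p) p p"
  unfolding geodesic_segment_def by auto

lemma ray_seg: assumes "geodesic_ray \<gamma>" "0 \<le> t" shows "geodesic_segment \<gamma> (\<gamma> 0) (\<gamma> t)"
  using assms unfolding geodesic_segment_def geodesic_ray_def by auto

lemma ray_dist0: assumes "geodesic_ray \<gamma>" "0 \<le> t" shows "dist (\<gamma> 0) (\<gamma> t) = t"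
  using assms unfolding geodesic_ray_def by auto

lemma cds_scale: assumes "a \<ge> 0" "b \<ge> 0" "a = 0 \<Longrightarrow> e = b" "b = 0 \<Longrightarrow> e = a"
  shows "comparison_dist_sq a b e (u*a) (u*b) = (u*e)\<^sup>2"
proof (cases "a = 0 \<or> b = 0")
  case True thus ?thesis using assms unfolding comparison_dist_sq_def by (auto simp: power2_eq_square)
next
  case False
  then have "a > 0" "b > 0" using assms by auto
  then show ?thesis unfolding comparison_dist_sq_def by (simp add: field_simps power2_eq_square)
qed

lemma lemA:
  assumes "CAT0 TYPE('a::metric_space)" "geodesic_segment c1 (x::'a) y" "geodesic_segment c2 x z"
    "0 \<le> u" "u \<le> 1"
  shows "dist (c1 (u * dist x y)) (c2 (u * dist x z)) \<le> u * dist y z"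
proof -
  have 1: "0 \<le> u * dist x y" "u * dist x y \<le> dist x y" "0 \<le> u * dist x z" "u * dist x z \<le> dist x z"
    using assms by (auto simp: mult_left_le_one_le)
  have "(dist (c1 (u * dist x y)) (c2 (u * dist x z)))\<^sup>2 \<le> (u * dist y z)\<^sup>2"
    using CAT0_cmp[OF assms(1-3) 1] cds_scale[of "dist x y" "dist x z" "dist y z" u]
    by (simp add: mult.commute dist_commute)
  then show ?thesis using assms(4) by (meson power2_le_imp_le zero_le_dist mult_nonneg_nonneg)
qed

lemma lemB:
  assumes "CAT0 TYPE('a::metric_space)" "geodesic_segment c (x::'a) y" "geodesic_segment c' x' y'"
    "0 \<le> u" "u \<le> 1"
  shows "dist (c (u * dist x y)) (c' (u * dist x' y')) \<le> (1-u) * dist x x' + u * dist y y'"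
proof -
  obtain m where m: "geodesic_segment m x y'" using CAT0_geod[OF assms(1)] by blast
  have A1: "dist (c (u * dist x y)) (m (u * dist x y')) \<le> u * dist y y'"
    using lemA[OF assms(1,2) m assms(4,5)] .
  have mr: "geodesic_segment (\<lambda>s. m (dist x y' - s)) y' x" using gs_rev[OF m] .
  have cr: "geodesic_segment (\<lambda>s. c' (dist x' y' - s)) y' x'" using gs_rev[OF assms(3)] by (simp add: dist_commute)
  have A2: "dist (m (dist x y' - (1-u) * dist y' x)) (c' (dist x' y' - (1-u) * dist y' x')) \<le> (1-u) * dist x x'"
    using lemA[OF assms(1) mr cr, of "1-u"] assms(4,5) by simp
  have e1: "dist x y' - (1-u) * dist y' x = u * dist x y'" by (simp add: dist_commute algebra_simps)
  have e2: "dist x' y' - (1-u) * dist y' x' = u * dist x' y'" by (simp add: dist_commute algebra_simps)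
  have "dist (c (u * dist x y)) (c' (u * dist x' y')) \<le> dist (c (u * dist x y)) (m (u * dist x y')) + dist (m (u * dist x y')) (c' (u * dist x' y'))"
    by (rule dist_triangle)
  also have "\<dots> \<le> u * dist y y' + (1-u) * dist x x'" using A1 A2 e1 e2 by simp
  finally show ?thesis by simp
qed


lemma iso_iter: fixes g :: "'a::metric_space \<Rightarrow> 'a" assumes "\<And>a b. dist (g a) (g b) = dist a b"
  shows "dist ((g^^n) a) ((g^^n) b) = dist a b"
proof (induction n)
  case 0 show ?case by simp
next
  case (Suc n) then show ?case using assms by simp
qed

lemma tl_bdd: "bdd_below (range (\<lambda>x::'a::metric_space. dist x (g x)))"
  by (rule bdd_belowI[of _ 0]) auto

lemma tl_le: "translation_length g \<le> dist x (g x)"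
  unfolding translation_length_def by (rule cInf_lower) (auto intro: tl_bdd)

lemma tl_approx: assumes "e > 0" shows "\<exists>y. dist y (g y) < translation_length g + e"
proof -
  have "Inf (range (\<lambda>x. dist x (g x))) < translation_length g + e"
    using assms unfolding translation_length_def by simp
  then show ?thesis by (subst (asm) cInf_less_iff) (auto intro: tl_bdd)
qed

lemma mid_lemma:
  assumes "CAT0 TYPE('a::metric_space)" "\<And>a b. dist (h a) (h b) = dist a b"
  shows "\<exists>y::'a. 2 * dist y (h y) \<le> dist x (h (h x))"
proof -
  obtain c where c: "geodesic_segment c x (h x)" using CAT0_geod[OF assms(1)] by blast
  define L where "L = dist x (h x)"
  have cr: "geodesic_segment (\<lambda>s. c (L - s)) (h x) x" using gs_rev[OF c] unfolding L_def .
  have hc: "geodesic_segment (h \<circ> c) (h x) (h (h x))" using gs_iso[OF c assms(2)] .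
  have "dist (c (L - (1/2) * dist (h x) x)) ((h \<circ> c) ((1/2) * dist (h x) (h (h x)))) \<le> (1/2) * dist x (h (h x))"
    using lemA[OF assms(1) cr hc, of "1/2"] by simp
  moreover have "dist (h x) x = L" "dist (h x) (h (h x)) = L" using assms(2) unfolding L_def by (auto simp: dist_commute)
  moreover have "L - (1/2) * L = (1/2) * L" by simp
  ultimately have "dist (c ((1/2) * L)) (h (c ((1/2) * L))) \<le> (1/2) * dist x (h (h x))" by simp
  then show ?thesis by (intro exI[of _ "c ((1/2) * L)"]) simp
qed

lemma pow2_lower:
  assumes "CAT0 TYPE('a::metric_space)" "\<And>a b. dist (g a) (g b) = dist a b"
  shows "2^k * translation_length g \<le> dist (x::'a) ((g^^(2^k)) x)"
proof (induction k arbitrary: x)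
  case 0 thus ?case using tl_le[of g x] by simp
next
  case (Suc k)
  define h where "h = g^^(2^k)"
  have hi: "\<And>a b. dist (h a) (h b) = dist a b" unfolding h_def by (rule iso_iter[OF assms(2)])
  obtain y where y: "2 * dist y (h y) \<le> dist x (h (h x))" using mid_lemma[OF assms(1) hi] by blast
  have "h (h x) = (g^^(2^Suc k)) x" unfolding h_def by (simp add: funpow_add mult_2)
  moreover have "2^k * translation_length g \<le> dist y (h y)" using Suc h_def by simp
  ultimately show ?case using y by simp
qed

lemma iter_subadd: fixes g :: "'a::metric_space \<Rightarrow> 'a"
  assumes "\<And>a b. dist (g a) (g b) = dist a b"
  shows "dist x ((g^^(m+n)) x) \<le> dist x ((g^^m) x) + dist x ((g^^n) x)"
proof -
  have "dist x ((g^^(m+n)) x) \<le> dist x ((g^^m) x) + dist ((g^^m) x) ((g^^m) ((g^^n) x))"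
    by (simp add: funpow_add dist_triangle)
  then show ?thesis using iso_iter[OF assms, of m x "(g^^n) x"] by simp
qed

lemma iter_mult: fixes g :: "'a::metric_space \<Rightarrow> 'a"
  assumes "\<And>a b. dist (g a) (g b) = dist a b"
  shows "dist x ((g^^(q*n)) x) \<le> real q * dist x ((g^^n) x)"
proof (induction q)
  case 0 thus ?case by simp
next
  case (Suc q)
  have "dist x ((g^^(q*n + n)) x) \<le> dist x ((g^^(q*n)) x) + dist x ((g^^n) x)" by (rule iter_subadd[OF assms])
  then show ?case using Suc by (simp add: add.commute algebra_simps)
qed

lemma lower_bound:
  assumes "CAT0 TYPE('a::metric_space)" "\<And>a b. dist (g a) (g b) = dist a b"
  shows "real n * translation_length g \<le> dist (x::'a) ((g^^n) x)"
proof (rule ccontr)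
  assume "\<not> ?thesis"
  hence lt: "dist x ((g^^n) x) < real n * translation_length g" by simp
  define D where "D = dist x ((g^^n) x)"
  define t where "t = translation_length g"
  define f1 where "f1 = dist x (g x)"
  have n0: "n > 0" using lt by (cases n) auto
  have pos: "t - D / n > 0" using lt n0 unfolding D_def t_def by (simp add: field_simps)
  obtain k :: nat where k: "real n * f1 / (t - D/n) < real k" using reals_Archimedean2 by blast
  have "k < 2^k" by (rule less_exp)
  hence "real k < 2^k" by (metis of_nat_less_iff of_nat_numeral of_nat_power)
  have "real n * f1 < real k * (t - D/n)" using k pos by (simp add: divide_less_eq)
  also have "\<dots> \<le> 2^k * (t - D/n)" using \<open>real k < 2^k\<close> pos by (intro mult_right_mono) auto
  finally have k2: "real n * f1 < 2^k * (t - D/n)" .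
  define q where "q = 2^k div n"
  define r where "r = 2^k mod n"
  have qr: "(2::nat)^k = q * n + r" unfolding q_def r_def by simp
  have rn: "r < n" unfolding r_def using n0 by simp
  have fr: "dist x ((g^^r) x) \<le> real r * f1"
    using iter_mult[OF assms(2), of x r 1] unfolding f1_def by simp
  have "2^k * t \<le> dist x ((g^^(2^k)) x)" using pow2_lower[OF assms] unfolding t_def by simp
  also have "\<dots> \<le> dist x ((g^^(q*n)) x) + dist x ((g^^r) x)" unfolding qr by (rule iter_subadd[OF assms(2)])
  also have "\<dots> \<le> real q * D + real r * f1" using iter_mult[OF assms(2), of x q n] fr unfolding D_def by simp
  also have "\<dots> \<le> real q * D + real n * f1"
    using rn unfolding f1_def by (intro add_left_mono mult_right_mono) auto
  finally have A: "2^k * t \<le> real q * D + real n * f1" .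
  have "real q * real n \<le> 2^k" using qr by (metis le_add1 of_nat_le_iff of_nat_mult of_nat_numeral of_nat_power)
  hence "real q \<le> 2^k / n" using n0 by (simp add: field_simps)
  hence "real q * D \<le> 2^k / n * D" unfolding D_def by (intro mult_right_mono) auto
  hence "2^k * t \<le> 2^k / n * D + real n * f1" using A by linarith
  hence "2^k * (t - D/n) \<le> real n * f1" by (simp add: algebra_simps)
  thus False using k2 by linarith
qed


lemma alg_U:
  fixes A R D t u X :: real
  assumes "0 \<le> A" "A \<le> R" "0 < D" "R < t" "\<bar>u\<bar> \<le> A" "0 \<le> X"
    "X\<^sup>2 \<le> A\<^sup>2 + t\<^sup>2 - t * (A\<^sup>2 + D\<^sup>2 - (D+u)\<^sup>2) / D"
  shows "X \<le> t + u + R\<^sup>2 / (2*(t-R))"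
proof -
  have t0: "t > 0" using assms by linarith
  have eq: "t * (A\<^sup>2 + D\<^sup>2 - (D+u)\<^sup>2) / D = t * A\<^sup>2 / D - 2*t*u - t * u\<^sup>2 / D"
    using assms(3) by (simp add: field_simps power2_eq_square)
  have le: "t * u\<^sup>2 / D \<le> t * A\<^sup>2 / D"
  proof -
    have "u\<^sup>2 \<le> A\<^sup>2" using assms(5) by (metis abs_le_square_iff abs_of_nonneg assms(1))
    thus ?thesis using t0 assms(3) by (intro divide_right_mono mult_left_mono) auto
  qed
  have "X\<^sup>2 \<le> A\<^sup>2 + t\<^sup>2 - (t * A\<^sup>2 / D - 2*t*u - t * u\<^sup>2 / D)" using assms(7) unfolding eq .
  hence "X\<^sup>2 \<le> A\<^sup>2 + t\<^sup>2 + 2*t*u" using le by linarith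
  also have "\<dots> \<le> (t+u)\<^sup>2 + R\<^sup>2"
  proof -
    have "A\<^sup>2 \<le> R\<^sup>2" using assms(1,2) by (simp add: power_mono)
    moreover have "(t+u)\<^sup>2 = t\<^sup>2 + 2*t*u + u\<^sup>2" by (simp add: power2_eq_square algebra_simps)
    ultimately show ?thesis using zero_le_power2[of u] by linarith
  qed
  finally have X2: "X\<^sup>2 \<le> (t+u)\<^sup>2 + R\<^sup>2" .
  define w where "w = t + u"
  have w: "w \<ge> t - R" "t - R > 0" using assms unfolding w_def by auto
  have "R\<^sup>2 \<le> R\<^sup>2 * w / (t-R)" using w by (simp add: le_divide_eq mult_left_mono)
  also have "R\<^sup>2 * w / (t-R) = 2 * w * (R\<^sup>2/(2*(t-R)))" using w by (simp add: field_simps)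
  finally have KK: "R\<^sup>2 \<le> 2 * w * (R\<^sup>2/(2*(t-R)))" .
  have "(w + R\<^sup>2/(2*(t-R)))\<^sup>2 = w\<^sup>2 + 2 * w * (R\<^sup>2/(2*(t-R))) + (R\<^sup>2/(2*(t-R)))\<^sup>2"
    by (simp add: power2_eq_square algebra_simps)
  hence "(t+u)\<^sup>2 + R\<^sup>2 \<le> (w + R\<^sup>2/(2*(t-R)))\<^sup>2"
    using KK zero_le_power2[of "R\<^sup>2/(2*(t-R))"] unfolding w_def by linarith
  hence "X\<^sup>2 \<le> (w + R\<^sup>2/(2*(t-R)))\<^sup>2" using X2 by linarith
  moreover have "w + R\<^sup>2/(2*(t-R)) \<ge> 0" using w by simp
  ultimately show ?thesis unfolding w_def using power2_le_imp_le by blast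
qed

lemma seg_unif:
  assumes cat: "CAT0 TYPE('a::metric_space)" and c: "geodesic_segment c (x0::'a) z"
    and R: "dist y x0 \<le> R" "R < t" "t \<le> dist x0 z"
  shows "dist y (c t) - t \<le> dist y z - dist x0 z + R\<^sup>2 / (2*(t-R))"
proof -
  obtain c1 where c1: "geodesic_segment c1 x0 y" using CAT0_geod[OF cat] by blast
  define A where "A = dist y x0"
  define D where "D = dist x0 z"
  define E where "E = dist y z"
  have A0: "0 \<le> A" unfolding A_def by simp
  have D0: "D > 0" using R unfolding D_def by (smt (verit) zero_le_dist)
  have c1A: "c1 A = y" using gs_end[OF c1] unfolding A_def by (simp add: dist_commute)
  have cmp: "(dist (c1 A) (c t))\<^sup>2 \<le> comparison_dist_sq A D E A t"
    using CAT0_cmp[OF cat c1 c, of A t] R A0 unfolding A_def D_def E_def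
    by (smt (verit, best) dist_commute zero_le_dist)
  have cmp2: "comparison_dist_sq A D E A t = A\<^sup>2 + t\<^sup>2 - t * (A\<^sup>2 + D\<^sup>2 - E\<^sup>2) / D"
  proof (cases "A = 0")
    case True
    hence "y = x0" unfolding A_def by simp
    hence "E = D" unfolding E_def D_def by simp
    thus ?thesis using True unfolding comparison_dist_sq_def by simp
  next
    case False
    thus ?thesis using A0 D0 unfolding comparison_dist_sq_def by (simp add: field_simps power2_eq_square)
  qed
  define u where "u = E - D"
  have u: "\<bar>u\<bar> \<le> A" unfolding u_def E_def D_def A_def
    by (smt (verit, best) dist_commute dist_triangle)
  have "dist y (c t) \<le> t + u + R\<^sup>2 / (2*(t-R))"
    apply (rule alg_U[of A R D t u])
    using A0 R D0 u cmp cmp2 c1A unfolding A_def u_def by auto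
  thus ?thesis unfolding u_def E_def D_def by simp
qed

definition FB :: "(real \<Rightarrow> 'a::metric_space) \<Rightarrow> 'a \<Rightarrow> real \<Rightarrow> real" where
  "FB \<gamma> y t = dist y (\<gamma> t) - t"

lemma FB_mono: assumes "geodesic_ray \<gamma>" "0 \<le> t" "t \<le> t'" shows "FB \<gamma> y t' \<le> FB \<gamma> y t"
proof -
  have "dist y (\<gamma> t') \<le> dist y (\<gamma> t) + dist (\<gamma> t) (\<gamma> t')" by (rule dist_triangle)
  moreover have "dist (\<gamma> t) (\<gamma> t') = t' - t" using assms unfolding geodesic_ray_def by auto
  ultimately show ?thesis unfolding FB_def by simp
qed

lemma FB_lower: assumes "geodesic_ray \<gamma>" "0 \<le> t" shows "- dist y (\<gamma> 0) \<le> FB \<gamma> y t"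
proof -
  have "dist (\<gamma> 0) (\<gamma> t) \<le> dist (\<gamma> 0) y + dist y (\<gamma> t)" by (rule dist_triangle)
  thus ?thesis using ray_dist0[OF assms] unfolding FB_def by (simp add: dist_commute)
qed

lemma FB_bdd: assumes "geodesic_ray \<gamma>" shows "bdd_below (FB \<gamma> y ` {0..})"
  using FB_lower[OF assms] by (intro bdd_belowI[of _ "- dist y (\<gamma> 0)"]) auto

lemma FB_tendsto: assumes "geodesic_ray \<gamma>"
  shows "(FB \<gamma> y \<longlongrightarrow> Inf (FB \<gamma> y ` {0..})) at_top"
proof (rule tendstoI)
  fix e :: real assume e: "e > 0"
  define L where "L = Inf (FB \<gamma> y ` {0..})"
  have "L < L + e" using e by simp
  then obtain t0 where t0: "t0 \<in> {0..}" "FB \<gamma> y t0 < L + e"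
    unfolding L_def by (subst (asm) cInf_less_iff) (auto intro: FB_bdd[OF assms])
  have "\<forall>t\<ge>t0. dist (FB \<gamma> y t) L < e"
  proof (intro allI impI)
    fix t assume "t0 \<le> t"
    hence "FB \<gamma> y t \<le> FB \<gamma> y t0" "L \<le> FB \<gamma> y t"
      using FB_mono[OF assms] t0 unfolding L_def by (auto intro!: cInf_lower FB_bdd[OF assms])
    thus "dist (FB \<gamma> y t) L < e" using t0 by (simp add: dist_real_def)
  qed
  thus "\<forall>\<^sub>F t in at_top. dist (FB \<gamma> y t) L < e" unfolding L_def eventually_at_top_linorder by blast
qed

lemma bus_eq: assumes "geodesic_ray \<gamma>" shows "busemann \<gamma> y = Inf (FB \<gamma> y ` {0..})"
  unfolding busemann_def using tendsto_Lim[OF trivial_limit_at_top_linorder FB_tendsto[OF assms, of y]]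
  unfolding FB_def by simp

lemma bus_tendsto: assumes "geodesic_ray \<gamma>" shows "(FB \<gamma> y \<longlongrightarrow> busemann \<gamma> y) at_top"
  using FB_tendsto[OF assms] bus_eq[OF assms] by simp

lemma bus_seq: assumes "geodesic_ray \<gamma>" shows "(\<lambda>n. FB \<gamma> y (real n)) \<longlonglongrightarrow> busemann \<gamma> y"
  using filterlim_compose[OF bus_tendsto[OF assms] filterlim_real_sequentially] by (simp add: o_def)

lemma bus_le: assumes "geodesic_ray \<gamma>" "0 \<le> t" shows "busemann \<gamma> y \<le> FB \<gamma> y t"
  unfolding bus_eq[OF assms(1)] using assms by (auto intro!: cInf_lower FB_bdd)

lemma bus_unif:
  assumes cat: "CAT0 TYPE('a::metric_space)" and g: "geodesic_ray \<gamma>"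
    and R: "dist (y::'a) (\<gamma> 0) \<le> R" "R < t"
  shows "FB \<gamma> y t - busemann \<gamma> y \<le> R\<^sup>2 / (2*(t-R))"
proof -
  have R0: "0 \<le> R" using R(1) zero_le_dist order_trans by blast
  have "FB \<gamma> y t - R\<^sup>2 / (2*(t-R)) \<le> Inf (FB \<gamma> y ` {0..})"
  proof (rule cInf_greatest)
    show "FB \<gamma> y ` {0..} \<noteq> {}" by auto
    fix v assume "v \<in> FB \<gamma> y ` {0..}"
    then obtain s where s: "s \<ge> 0" "v = FB \<gamma> y s" by auto
    show "FB \<gamma> y t - R\<^sup>2 / (2*(t-R)) \<le> v"
    proof (cases "s \<le> t")
      case True
      have "FB \<gamma> y t \<le> FB \<gamma> y s" using FB_mono[OF g s(1) True] .
      moreover have "R\<^sup>2 / (2*(t-R)) \<ge> 0" using R by simp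
      ultimately show ?thesis using s by linarith
    next
      case False
      have seg: "geodesic_segment \<gamma> (\<gamma> 0) (\<gamma> s)" using ray_seg[OF g s(1)] .
      have "dist y (\<gamma> t) - t \<le> dist y (\<gamma> s) - dist (\<gamma> 0) (\<gamma> s) + R\<^sup>2 / (2*(t-R))"
        using seg_unif[OF cat seg R(1) R(2)] ray_dist0[OF g s(1)] False by simp
      thus ?thesis using s ray_dist0[OF g s(1)] unfolding FB_def by simp
    qed
  qed
  thus ?thesis using bus_eq[OF g] by simp
qed

lemma bus_lip: assumes "geodesic_ray \<gamma>" shows "\<bar>busemann \<gamma> y - busemann \<gamma> z\<bar> \<le> dist y z"
proof -
  have "((\<lambda>t. FB \<gamma> y t - FB \<gamma> z t) \<longlongrightarrow> busemann \<gamma> y - busemann \<gamma> z) at_top"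
    by (intro tendsto_diff bus_tendsto[OF assms])
  hence "((\<lambda>t. \<bar>FB \<gamma> y t - FB \<gamma> z t\<bar>) \<longlongrightarrow> \<bar>busemann \<gamma> y - busemann \<gamma> z\<bar>) at_top"
    by (rule tendsto_rabs)
  moreover have "\<forall>t. \<bar>FB \<gamma> y t - FB \<gamma> z t\<bar> \<le> dist y z" unfolding FB_def
    by (smt (verit) dist_commute dist_triangle)
  ultimately show ?thesis
    by (intro tendsto_upperbound[OF _ _ trivial_limit_at_top_linorder]) auto
qed

lemma bus_on_ray: assumes "geodesic_ray \<gamma>" "0 \<le> s" shows "busemann \<gamma> (\<gamma> s) = - s"
proof -
  have "\<forall>t\<ge>s. FB \<gamma> (\<gamma> s) t = - s" using assms unfolding FB_def geodesic_ray_def by auto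
  hence "eventually (\<lambda>t. FB \<gamma> (\<gamma> s) t = - s) at_top" unfolding eventually_at_top_linorder by blast
  hence "(FB \<gamma> (\<gamma> s) \<longlongrightarrow> - s) at_top" by (rule tendsto_eventually)
  thus ?thesis using bus_tendsto[OF assms(1)] tendsto_unique[OF trivial_limit_at_top_linorder] by blast
qed

lemma bus_cong: assumes "geodesic_ray \<gamma>" "geodesic_ray \<delta>" "\<forall>t\<ge>0. \<gamma> t = \<delta> t"
  shows "busemann \<gamma> = busemann \<delta>"
proof
  fix y
  have "eventually (\<lambda>t. FB \<gamma> y t = FB \<delta> y t) at_top"
    unfolding eventually_at_top_linorder FB_def by (rule exI[of _ 0]) (simp add: assms)
  hence "(FB \<delta> y \<longlongrightarrow> busemann \<gamma> y) at_top" using tendsto_cong bus_tendsto[OF assms(1)] by blast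
  thus "busemann \<gamma> y = busemann \<delta> y"
    using bus_tendsto[OF assms(2)] tendsto_unique[OF trivial_limit_at_top_linorder] by blast
qed


lemma alg_KE:
  fixes ak an e s tau eps k :: real
  assumes "0 < ak" "0 < an" "0 < tau" "0 < k" "tau * k \<le> ak" "e - an + ak \<le> 2*eps*k"
    "0 \<le> e + an - ak" "e + an - ak \<le> 2*an" "0 \<le> eps"
  shows "s\<^sup>2 + s\<^sup>2 - s * s * (ak\<^sup>2 + an\<^sup>2 - e\<^sup>2) / (ak * an) \<le> 4 * eps * s\<^sup>2 / tau"
proof -
  have eq: "s\<^sup>2 + s\<^sup>2 - s * s * (ak\<^sup>2 + an\<^sup>2 - e\<^sup>2) / (ak * an) = s\<^sup>2 * ((e - an + ak) * (e + an - ak)) / (ak * an)"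
    using assms(1,2) by (simp add: field_simps power2_eq_square)
  have P: "(e - an + ak) * (e + an - ak) \<le> (2*eps*k) * (2*an)"
  proof (cases "e - an + ak \<ge> 0")
    case True thus ?thesis using assms by (intro mult_mono) auto
  next
    case False
    hence "(e - an + ak) * (e + an - ak) \<le> 0" using assms(7) by (simp add: mult_nonpos_nonneg)
    moreover have "0 \<le> (2*eps*k) * (2*an)" using assms by simp
    ultimately show ?thesis by linarith
  qed
  have "s\<^sup>2 * ((e - an + ak) * (e + an - ak)) / (ak * an) \<le> s\<^sup>2 * ((2*eps*k) * (2*an)) / (ak * an)"
    using P assms(1,2) by (intro divide_right_mono mult_left_mono) auto
  also have "\<dots> = 4 * eps * s\<^sup>2 * k / ak" using assms(1,2) by (simp add: field_simps)
  also have "\<dots> \<le> 4 * eps * s\<^sup>2 / tau"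
  proof -
    have "k / ak \<le> 1 / tau" using assms(1,3,5) by (simp add: field_simps mult.commute)
    hence "4 * eps * s\<^sup>2 * (k / ak) \<le> 4 * eps * s\<^sup>2 * (1/tau)" using assms(9) by (intro mult_left_mono) auto
    thus ?thesis by simp
  qed
  finally show ?thesis using eq by simp
qed


locale KMset =
  fixes x0 :: "'a::complete_space" and g :: "'a \<Rightarrow> 'a"
  assumes cat: "CAT0 TYPE('a)" and iso: "isometry g" and tpos: "translation_length g > 0"
begin

lemma gd: "dist (g a) (g b) = dist a b" using iso unfolding isometry_def by auto

definition "aa n = dist x0 ((g^^n) x0)"
definition "sig n = (SOME c. geodesic_segment c x0 ((g^^n) x0))"
definition "good e n \<longleftrightarrow> (\<forall>j<n. (translation_length g - e) * (real n - real j) \<le> aa n - aa j)"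
definition "KK e = (SOME K::nat. \<forall>k\<ge>K. aa k \<le> (translation_length g + e) * real k)"
definition "eps i = translation_length g / real (Suc i)"

lemma sig: "geodesic_segment (sig n) x0 ((g^^n) x0)"
  unfolding sig_def using CAT0_geod[OF cat] by (metis someI_ex)

lemma aa_lower: "real n * translation_length g \<le> aa n"
  unfolding aa_def using lower_bound[OF cat gd] by simp

lemma aa0: "aa 0 = 0" unfolding aa_def by simp

lemma aa_dist: "m \<le> n \<Longrightarrow> dist ((g^^m) x0) ((g^^n) x0) = aa (n - m)"
proof -
  assume "m \<le> n"
  hence "(g^^n) x0 = (g^^m) ((g^^(n-m)) x0)" by (metis funpow_add le_add_diff_inverse o_apply)
  thus ?thesis unfolding aa_def using iso_iter[OF gd] by simp
qed

lemma aa_sub: "aa (m + n) \<le> aa m + aa n" unfolding aa_def by (rule iter_subadd[OF gd])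

lemma aa_Suc: "aa k \<le> aa (Suc k) + aa 1" "aa (Suc k) \<le> aa k + aa 1"
proof -
  have "aa k \<le> dist x0 ((g^^(Suc k)) x0) + dist ((g^^k) x0) ((g^^(Suc k)) x0)"
    unfolding aa_def by (metis dist_commute dist_triangle)
  thus "aa k \<le> aa (Suc k) + aa 1" using aa_dist[of k "Suc k"] unfolding aa_def by simp
  show "aa (Suc k) \<le> aa k + aa 1" using aa_sub[of k 1] by simp
qed

end

context KMset begin
lemma aa_upper: assumes "e > 0" shows "\<exists>K::nat. \<forall>k\<ge>K. aa k \<le> (translation_length g + e) * real k"
proof -
  obtain y where y: "dist y (g y) < translation_length g + e/2" using tl_approx[of "e/2" g] assms by auto
  define d0 where "d0 = dist x0 y"
  obtain K :: nat where K: "4 * d0 / e < real K" using reals_Archimedean2 by blast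
  have "\<forall>k\<ge>K. aa k \<le> (translation_length g + e) * real k"
  proof (intro allI impI)
    fix k assume k: "K \<le> k"
    have t1: "dist x0 ((g^^k) x0) \<le> dist x0 y + dist y ((g^^k) x0)" by (rule dist_triangle)
    have t2: "dist y ((g^^k) x0) \<le> dist y ((g^^k) y) + dist ((g^^k) y) ((g^^k) x0)" by (rule dist_triangle)
    have "aa k \<le> dist x0 y + dist y ((g^^k) y) + dist ((g^^k) y) ((g^^k) x0)"
      unfolding aa_def using t1 t2 by linarith
    also have "dist ((g^^k) y) ((g^^k) x0) = d0" unfolding d0_def using iso_iter[OF gd] by (simp add: dist_commute)
    also have "dist y ((g^^k) y) \<le> real k * dist y (g y)" using iter_mult[OF gd, of y k 1] by simp
    also have "\<dots> \<le> real k * (translation_length g + e/2)" using y by (intro mult_left_mono) auto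
    finally have A: "aa k \<le> 2 * d0 + real k * (translation_length g + e/2)" unfolding d0_def by simp
    have "4 * d0 / e < real k" using K k by linarith
    hence "4 * d0 < real k * e" using assms by (simp add: divide_less_eq)
    thus "aa k \<le> (translation_length g + e) * real k" using A by (simp add: algebra_simps)
  qed
  thus ?thesis by blast
qed

lemma KK: assumes "e > 0" "KK e \<le> k" shows "aa k \<le> (translation_length g + e) * real k"
proof -
  have "\<forall>k\<ge>KK e. aa k \<le> (translation_length g + e) * real k"
    unfolding KK_def using aa_upper[OF assms(1)] by (rule someI_ex)
  thus ?thesis using assms by blast
qed

lemma good_mono: "good e n \<Longrightarrow> e \<le> e' \<Longrightarrow> good e' n"
  unfolding good_def
proof (intro allI impI)
  fix j assume H: "\<forall>j<n. (translation_length g - e) * (real n - real j) \<le> aa n - aa j" "e \<le> e'" "j < n"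
  have "(translation_length g - e') * (real n - real j) \<le> (translation_length g - e) * (real n - real j)"
    using H by (intro mult_right_mono) auto
  moreover have "(translation_length g - e) * (real n - real j) \<le> aa n - aa j" using H by blast
  ultimately show "(translation_length g - e') * (real n - real j) \<le> aa n - aa j" by linarith
qed

lemma good_exists: assumes "e > 0" shows "\<exists>n\<ge>M. good e n"
proof -
  define b where "b j = aa j - (translation_length g - e) * real j" for j
  have bge: "b j \<ge> e * real j" for j using aa_lower[of j] unfolding b_def by (simp add: algebra_simps)
  define B where "B = Max (b ` {..M})"
  have bB: "j \<le> M \<Longrightarrow> b j \<le> B" for j unfolding B_def by (intro Max_ge) auto
  obtain n :: nat where n: "B / e < real n" using reals_Archimedean2 by blast
  have "b n > B" using bge[of n] n assms by (smt (verit, ccfv_SIG) divide_less_eq mult.commute)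
  define n0 where "n0 = (LEAST n. b n > B)"
  have n0: "b n0 > B" unfolding n0_def by (rule LeastI[of _ n]) fact
  have lt: "j < n0 \<Longrightarrow> b j \<le> B" for j unfolding n0_def using not_less_Least by force
  have "n0 \<ge> M" proof (rule ccontr) assume "\<not> M \<le> n0" thus False using bB[of n0] n0 by simp qed
  moreover have "good e n0" unfolding good_def
  proof (intro allI impI)
    fix j assume "j < n0"
    hence "b j < b n0" using lt n0 by force
    thus "(translation_length g - e) * (real n0 - real j) \<le> aa n0 - aa j" unfolding b_def by (simp add: algebra_simps)
  qed
  ultimately show ?thesis by blast
qed

end

context KMset begin
lemma aa_pos: assumes "1 \<le> k" shows "aa k > 0"
proof -
  have "real k * translation_length g > 0" using assms tpos by simp
  thus ?thesis using aa_lower[of k] by linarith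
qed

lemma KE:
  assumes e: "0 < e" "e \<le> translation_length g" and k: "aa k \<le> (translation_length g + e) * real k"
    and kn: "1 \<le> k" "k \<le> n" and gn: "good e n" and s: "0 \<le> s" "s \<le> aa k"
  shows "(dist (sig k s) (sig n s))\<^sup>2 \<le> 4 * e * s\<^sup>2 / translation_length g"
proof -
  let ?t = "translation_length g"
  have akp: "aa k > 0" using aa_pos kn by simp
  have anp: "aa n > 0" using aa_pos kn by simp
  have akn: "aa k \<le> aa n"
  proof (cases "k = n")
    case False
    hence "k < n" using kn by simp
    hence "(?t - e) * (real n - real k) \<le> aa n - aa k" using gn unfolding good_def by blast
    moreover have "0 \<le> (?t - e) * (real n - real k)" using e kn by simp
    ultimately show ?thesis by linarith
  qed simp
  define E where "E = dist ((g^^k) x0) ((g^^n) x0)"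
  have E: "E = aa (n - k)" unfolding E_def using aa_dist kn by simp
  have "n - k < n" using kn by simp
  hence "(?t - e) * (real n - real (n-k)) \<le> aa n - aa (n-k)" using gn unfolding good_def by blast
  moreover have "real n - real (n-k) = real k" using kn by (simp add: of_nat_diff)
  ultimately have g1: "(?t - e) * real k \<le> aa n - aa (n-k)" by simp
  have h1: "E - aa n + aa k \<le> 2*e*real k" using g1 k E by (simp add: algebra_simps)
  have h2: "0 \<le> E + aa n - aa k" unfolding E_def aa_def by (smt (verit) dist_commute dist_triangle)
  have h3: "E + aa n - aa k \<le> 2 * aa n" unfolding E_def aa_def by (smt (verit) dist_commute dist_triangle)
  have "(dist (sig k s) (sig n s))\<^sup>2 \<le> comparison_dist_sq (aa k) (aa n) E s s"
    using CAT0_cmp[OF cat sig[of k] sig[of n], of s s] s akn unfolding aa_def E_def by simp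
  also have "\<dots> \<le> 4 * e * s\<^sup>2 / ?t" unfolding comparison_dist_sq_def
    using alg_KE[of "aa k" "aa n" "translation_length g" "real k" E e s] akp anp tpos h1 h2 h3 aa_lower[of k] kn e
    by (simp add: mult.commute)
  finally show ?thesis .
qed

end

lemma sqrt_bound:
  fixes X s m :: real
  assumes "0 \<le> X" "0 \<le> s" "0 < m" "X\<^sup>2 \<le> 4 * s\<^sup>2 / m"
  shows "X \<le> 2 * s / sqrt m"
proof -
  have "(2 * s / sqrt m)\<^sup>2 = 4 * s\<^sup>2 / m" using assms(3) by (simp add: power_divide power_mult_distrib)
  hence "X\<^sup>2 \<le> (2 * s / sqrt m)\<^sup>2" using assms(4) by simp
  moreover have "0 \<le> 2 * s / sqrt m" using assms by simp
  ultimately show ?thesis by (rule power2_le_imp_le)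
qed

context KMset begin

lemma eps_pos: "eps i > 0" unfolding eps_def using tpos by simp
lemma eps_le: "eps i \<le> translation_length g" unfolding eps_def using tpos by (simp add: divide_le_eq)
lemma eps_mono: "i \<le> j \<Longrightarrow> eps j \<le> eps i" unfolding eps_def using tpos by (simp add: frac_le)

primrec NN :: "nat \<Rightarrow> nat" where
  "NN 0 = (SOME n. n \<ge> max 1 (KK (eps 0)) \<and> good (eps 0) n)"
| "NN (Suc i) = (SOME n. n \<ge> max (Suc (NN i)) (KK (eps (Suc i))) \<and> good (eps (Suc i)) n)"

lemma NN_spec: "NN i \<ge> 1 \<and> NN i \<ge> KK (eps i) \<and> good (eps i) (NN i) \<and> NN (Suc i) > NN i"
proof (induction i)
  case 0
  have A: "NN 0 \<ge> max 1 (KK (eps 0)) \<and> good (eps 0) (NN 0)"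
    unfolding NN.simps using good_exists[OF eps_pos] by (rule someI_ex)
  have B: "NN (Suc 0) \<ge> max (Suc (NN 0)) (KK (eps (Suc 0))) \<and> good (eps (Suc 0)) (NN (Suc 0))"
    unfolding NN.simps(2) using good_exists[OF eps_pos] by (rule someI_ex)
  show ?case using A B by simp
next
  case (Suc i)
  have A: "NN (Suc i) \<ge> max (Suc (NN i)) (KK (eps (Suc i))) \<and> good (eps (Suc i)) (NN (Suc i))"
    unfolding NN.simps(2) using good_exists[OF eps_pos] by (rule someI_ex)
  have B: "NN (Suc (Suc i)) \<ge> max (Suc (NN (Suc i))) (KK (eps (Suc (Suc i)))) \<and> good (eps (Suc (Suc i))) (NN (Suc (Suc i)))"
    unfolding NN.simps(2)[of "Suc i"] using good_exists[OF eps_pos] by (rule someI_ex)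
  show ?case using A B Suc by simp
qed

lemma NN_smono: "strict_mono NN" using NN_spec by (intro strict_monoI_Suc) auto
lemma NN_ge: "i \<le> NN i" using NN_smono by (rule strict_mono_imp_increasing)
lemma NN_mono: "i \<le> j \<Longrightarrow> NN i \<le> NN j" using NN_smono strict_mono_less_eq by blast
lemma NN_good: "i \<le> j \<Longrightarrow> good (eps i) (NN j)" using NN_spec[of j] eps_mono good_mono by blast

lemma KE2:
  assumes "1 \<le> k" "KK (eps i) \<le> k" "i \<le> j" "k \<le> NN j" "0 \<le> s" "s \<le> aa k"
  shows "dist (sig k s) (sig (NN j) s) \<le> 2 * s / sqrt (real (Suc i))"
proof -
  have "(dist (sig k s) (sig (NN j) s))\<^sup>2 \<le> 4 * eps i * s\<^sup>2 / translation_length g"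
    using KE[OF eps_pos eps_le KK[OF eps_pos assms(2)] assms(1) assms(4) NN_good[OF assms(3)] assms(5,6)] .
  also have "\<dots> = 4 * s\<^sup>2 / real (Suc i)" unfolding eps_def using tpos by (simp add: field_simps del: of_nat_Suc)
  finally have "(dist (sig k s) (sig (NN j) s))\<^sup>2 \<le> 4 * s\<^sup>2 / real (Suc i)" .
  thus ?thesis using sqrt_bound[of "dist (sig k s) (sig (NN j) s)" s "real (Suc i)"] assms(5) by simp
qed

lemma ev_aa: "eventually (\<lambda>j. r \<le> aa (NN j)) sequentially"
proof -
  obtain J :: nat where J: "r / translation_length g < real J" using reals_Archimedean2 by blast
  have "\<forall>j\<ge>J. r \<le> aa (NN j)"
  proof (intro allI impI)
    fix j assume "J \<le> j"
    hence "real J \<le> real (NN j)" using NN_ge[of j] by simp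
    hence "real J * translation_length g \<le> real (NN j) * translation_length g" using tpos by (intro mult_right_mono) auto
    moreover have "r < real J * translation_length g" using J tpos by (simp add: divide_less_eq)
    ultimately have "r < real (NN j) * translation_length g" by linarith
    thus "r \<le> aa (NN j)" using aa_lower[of "NN j"] by linarith
  qed
  thus ?thesis unfolding eventually_sequentially by blast
qed

definition "gam s = lim (\<lambda>j. sig (NN j) s)"

lemma gam_conv: assumes "0 \<le> s" shows "(\<lambda>j. sig (NN j) s) \<longlonglongrightarrow> gam s"
proof -
  have "Cauchy (\<lambda>j. sig (NN j) s)"
  proof (rule metric_CauchyI)
    fix e :: real assume e: "e > 0"
    obtain I1 :: nat where I1: "s / translation_length g < real I1" using reals_Archimedean2 by blast
    obtain I2 :: nat where I2: "(4 * s / e)\<^sup>2 < real I2" using reals_Archimedean2 by blast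
    define I where "I = max I1 I2"
    define k where "k = NN I"
    have k1: "1 \<le> k" "KK (eps I) \<le> k" unfolding k_def using NN_spec[of I] by auto
    have sk: "s \<le> aa k"
    proof -
      have "real I1 \<le> real k" unfolding k_def I_def using NN_ge[of "max I1 I2"] by simp
      hence "real I1 * translation_length g \<le> real k * translation_length g" using tpos by (intro mult_right_mono) auto
      moreover have "s < real I1 * translation_length g" using I1 tpos by (simp add: divide_less_eq)
      ultimately have "s < real k * translation_length g" by linarith
      thus ?thesis using aa_lower[of k] by linarith
    qed
    have "4 * s / e < sqrt (real (Suc I))"
      using I2 unfolding I_def by (intro real_less_rsqrt) simp
    hence bnd: "4 * s / sqrt (real (Suc I)) < e" using e by (simp add: field_simps)
    have "\<forall>m\<ge>I. \<forall>n\<ge>I. dist (sig (NN m) s) (sig (NN n) s) < e"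
    proof (intro allI impI)
      fix m n assume mn: "I \<le> m" "I \<le> n"
      have "dist (sig k s) (sig (NN m) s) \<le> 2 * s / sqrt (real (Suc I))"
        using KE2[OF k1 mn(1) _ assms sk] NN_mono[OF mn(1)] unfolding k_def by simp
      moreover have "dist (sig k s) (sig (NN n) s) \<le> 2 * s / sqrt (real (Suc I))"
        using KE2[OF k1 mn(2) _ assms sk] NN_mono[OF mn(2)] unfolding k_def by simp
      moreover have "dist (sig (NN m) s) (sig (NN n) s) \<le> dist (sig k s) (sig (NN m) s) + dist (sig k s) (sig (NN n) s)"
        by (rule dist_triangle3)
      ultimately show "dist (sig (NN m) s) (sig (NN n) s) < e" using bnd by simp
    qed
    thus "\<exists>M. \<forall>m\<ge>M. \<forall>n\<ge>M. dist (sig (NN m) s) (sig (NN n) s) < e" by blast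
  qed
  hence "convergent (\<lambda>j. sig (NN j) s)" by (rule Cauchy_convergent)
  thus ?thesis unfolding gam_def by (simp add: convergent_LIMSEQ_iff)
qed

lemma gam_est:
  assumes "1 \<le> k" "KK (eps i) \<le> k" "0 \<le> s" "s \<le> aa k"
  shows "dist (sig k s) (gam s) \<le> 2 * s / sqrt (real (Suc i))"
proof -
  have T: "(\<lambda>j. dist (sig k s) (sig (NN j) s)) \<longlonglongrightarrow> dist (sig k s) (gam s)"
    by (intro tendsto_dist tendsto_const gam_conv assms(3))
  have "eventually (\<lambda>j. dist (sig k s) (sig (NN j) s) \<le> 2 * s / sqrt (real (Suc i))) sequentially"
    unfolding eventually_sequentially
  proof (intro exI[of _ "max i k"] allI impI)
    fix j assume "max i k \<le> j"
    hence "i \<le> j" "k \<le> NN j" using NN_ge[of j] by auto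
    thus "dist (sig k s) (sig (NN j) s) \<le> 2 * s / sqrt (real (Suc i))" using KE2 assms by blast
  qed
  thus ?thesis using tendsto_upperbound[OF T] by simp
qed

lemma gam_ray: "geodesic_ray gam"
  unfolding geodesic_ray_def
proof (intro allI impI)
  fix s t :: real assume st: "0 \<le> s" "0 \<le> t"
  have T: "(\<lambda>j. dist (sig (NN j) s) (sig (NN j) t)) \<longlonglongrightarrow> dist (gam s) (gam t)"
    by (intro tendsto_dist gam_conv st)
  have "eventually (\<lambda>j. dist (sig (NN j) s) (sig (NN j) t) = \<bar>s - t\<bar>) sequentially"
    using ev_aa[of "max s t"]
  proof (rule eventually_mono)
    fix j assume "max s t \<le> aa (NN j)"
    thus "dist (sig (NN j) s) (sig (NN j) t) = \<bar>s - t\<bar>"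
      using gs_dist[OF sig[of "NN j"]] st unfolding aa_def by simp
  qed
  hence "(\<lambda>j. dist (sig (NN j) s) (sig (NN j) t)) \<longlonglongrightarrow> \<bar>s - t\<bar>"
    by (rule tendsto_eventually)
  thus "dist (gam s) (gam t) = \<bar>s - t\<bar>" using LIMSEQ_unique[OF T] by simp
qed

lemma gam0: "gam 0 = x0"
proof -
  have "(\<lambda>j. sig (NN j) 0) = (\<lambda>j. x0)" using gs_start[OF sig] by auto
  hence "(\<lambda>j. sig (NN j) 0) \<longlonglongrightarrow> x0" by simp
  thus ?thesis using LIMSEQ_unique[OF gam_conv[of 0]] by simp
qed

lemma track_est:
  assumes "1 \<le> k" "KK (eps i) \<le> k"
  shows "dist ((g^^k) x0) (gam (aa k)) \<le> 2 * aa k / sqrt (real (Suc i))"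
proof -
  have "sig k (aa k) = (g^^k) x0" using gs_end[OF sig[of k]] unfolding aa_def .
  thus ?thesis using gam_est[OF assms, of "aa k"] aa_pos[OF assms(1)] by simp
qed

end

context KMset begin

lemma track: "(\<lambda>n. dist ((g^^n) x0) (gam (translation_length g * real n)) / real n) \<longlonglongrightarrow> 0"
proof (rule LIMSEQ_I)
  fix r :: real assume r: "r > 0"
  let ?t = "translation_length g"
  obtain i :: nat where i: "(4 * (?t + 1) / r)\<^sup>2 < real i" using reals_Archimedean2 by blast
  define q where "q = sqrt (real (Suc i))"
  have q0: "q > 0" unfolding q_def by simp
  have "4 * (?t + 1) / r < q" unfolding q_def using i by (intro real_less_rsqrt) simp
  hence qb: "2 * (?t + 1) / q < r / 2" using r q0 by (simp add: field_simps)
  define e1 where "e1 = min 1 (r/4)"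
  have e1: "e1 > 0" "e1 \<le> 1" "e1 \<le> r/4" unfolding e1_def using r by auto
  define no where "no = max 1 (max (KK (eps i)) (KK e1))"
  have "\<forall>n\<ge>no. norm (dist ((g^^n) x0) (gam (?t * real n)) / real n - 0) < r"
  proof (intro allI impI)
    fix n assume n: "no \<le> n"
    have n1: "1 \<le> n" "KK (eps i) \<le> n" "KK e1 \<le> n" using n unfolding no_def by auto
    have npos: "real n > 0" using n1 by simp
    have A: "aa n \<le> (?t + e1) * real n" using KK[OF e1(1) n1(3)] .
    have B: "real n * ?t \<le> aa n" by (rule aa_lower)
    have C: "dist ((g^^n) x0) (gam (aa n)) \<le> 2 * aa n / q" using track_est[OF n1(1,2)] unfolding q_def .
    have D: "dist (gam (aa n)) (gam (?t * real n)) = aa n - ?t * real n"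
    proof -
      have "0 \<le> ?t * real n" using tpos by simp
      moreover have "0 \<le> aa n" unfolding aa_def by simp
      ultimately have "dist (gam (aa n)) (gam (?t * real n)) = \<bar>aa n - ?t * real n\<bar>"
        using gam_ray unfolding geodesic_ray_def by blast
      thus ?thesis using B by (simp add: mult.commute)
    qed
    have "2 * aa n / q \<le> 2 * ((?t + 1) * real n) / q"
      using A e1 q0 npos by (intro divide_right_mono mult_left_mono) (auto intro: order_trans)
    also have "\<dots> = real n * (2 * (?t + 1) / q)" by simp
    also have "\<dots> < real n * (r/2)" using qb npos by (intro mult_strict_left_mono) auto
    finally have E: "2 * aa n / q < real n * (r/2)" .
    have "dist ((g^^n) x0) (gam (?t * real n)) \<le> dist ((g^^n) x0) (gam (aa n)) + dist (gam (aa n)) (gam (?t * real n))"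
      by (rule dist_triangle)
    also have "\<dots> < real n * (r/2) + real n * (r/4)"
    proof -
      have "aa n - ?t * real n \<le> e1 * real n" using A by (simp add: algebra_simps)
      also have "\<dots> \<le> (r/4) * real n" using e1 npos by (intro mult_right_mono) auto
      finally show ?thesis using C D E by (simp add: mult.commute)
    qed
    also have "\<dots> < real n * r" using npos r by (simp add: algebra_simps)
    finally have "dist ((g^^n) x0) (gam (?t * real n)) / real n < r" using npos by (simp add: divide_less_eq mult.commute)
    thus "norm (dist ((g^^n) x0) (gam (?t * real n)) / real n - 0) < r" by simp
  qed
  thus "\<exists>no. \<forall>n\<ge>no. norm (dist ((g^^n) x0) (gam (?t * real n)) / real n - 0) < r" by blast
qed

definition "ff t = dist (g (gam t)) (gam t)"

lemma ff_conv: assumes "0 \<le> u" "u \<le> 1" "0 \<le> t" shows "ff (u * t) \<le> (1 - u) * ff 0 + u * ff t"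
proof -
  have s1: "geodesic_segment gam (gam 0) (gam t)" using ray_seg[OF gam_ray assms(3)] .
  have s2: "geodesic_segment (g \<circ> gam) (g (gam 0)) (g (gam t))" using gs_iso[OF s1 gd] .
  have d: "dist (gam 0) (gam t) = t" using ray_dist0[OF gam_ray assms(3)] .
  have "dist (gam (u * dist (gam 0) (gam t))) ((g \<circ> gam) (u * dist (g (gam 0)) (g (gam t))))
        \<le> (1 - u) * dist (gam 0) (g (gam 0)) + u * dist (gam t) (g (gam t))"
    using lemB[OF cat s1 s2 assms(1,2)] .
  thus ?thesis unfolding ff_def using d gd by (simp add: dist_commute)
qed

lemma ff_at: assumes "1 \<le> k" "KK (eps i) \<le> k"
  shows "ff (aa k) \<le> (4 * aa k + 2 * aa 1) / sqrt (real (Suc i)) + aa 1"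
proof -
  define q where "q = sqrt (real (Suc i))"
  have q0: "q > 0" unfolding q_def by simp
  have d1: "dist (g (gam (aa k))) (g ((g^^k) x0)) \<le> 2 * aa k / q"
    using track_est[OF assms] gd unfolding q_def by (simp add: dist_commute)
  have d2: "dist ((g^^Suc k) x0) (gam (aa (Suc k))) \<le> 2 * aa (Suc k) / q"
    using track_est[of "Suc k" i] assms unfolding q_def by simp
  have d3: "dist (gam (aa (Suc k))) (gam (aa k)) \<le> aa 1"
  proof -
    have "aa (Suc k) \<ge> 0" "aa k \<ge> 0" unfolding aa_def by auto
    hence "dist (gam (aa (Suc k))) (gam (aa k)) = \<bar>aa (Suc k) - aa k\<bar>" using gam_ray unfolding geodesic_ray_def by auto
    thus ?thesis using aa_Suc[of k] by simp
  qed
  have "ff (aa k) \<le> dist (g (gam (aa k))) (g ((g^^k) x0)) + dist ((g^^Suc k) x0) (gam (aa (Suc k))) + dist (gam (aa (Suc k))) (gam (aa k))"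
  proof -
    have "dist (g (gam (aa k))) (gam (aa k)) \<le> dist (g (gam (aa k))) (g ((g^^k) x0)) + dist (g ((g^^k) x0)) (gam (aa k))"
      by (rule dist_triangle)
    moreover have "dist (g ((g^^k) x0)) (gam (aa k)) \<le> dist ((g^^Suc k) x0) (gam (aa (Suc k))) + dist (gam (aa (Suc k))) (gam (aa k))"
      using dist_triangle[of "(g^^Suc k) x0" "gam (aa k)" "gam (aa (Suc k))"] by simp
    ultimately show ?thesis unfolding ff_def by linarith
  qed
  also have "\<dots> \<le> 2 * aa k / q + 2 * aa (Suc k) / q + aa 1" using d1 d2 d3 by simp
  also have "2 * aa (Suc k) / q \<le> 2 * (aa k + aa 1) / q" using aa_Suc[of k] q0 by (intro divide_right_mono) auto
  finally show ?thesis unfolding q_def[symmetric] by (simp add: add_divide_distrib algebra_simps)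
qed

lemma ff_bound: assumes "0 \<le> t" shows "ff t \<le> ff 0"
proof (rule ccontr)
  assume "\<not> ff t \<le> ff 0"
  hence gt: "ff t > ff 0" by simp
  have t0: "t > 0" using gt assms by (cases "t = 0") auto
  define c where "c = (ff t - ff 0) / t"
  have c0: "c > 0" unfolding c_def using gt t0 by simp
  have ff0: "ff 0 \<ge> 0" unfolding ff_def by simp
  have lowerT: "ff T \<ge> c * T" if T: "T \<ge> t" for T
  proof -
    have Tp: "T > 0" using T t0 by simp
    have "ff ((t/T) * T) \<le> (1 - t/T) * ff 0 + (t/T) * ff T"
      using ff_conv[of "t/T" T] Tp T t0 by (simp add: divide_le_eq)
    hence "ff t \<le> (1 - t/T) * ff 0 + (t/T) * ff T" using Tp by simp
    hence "T * ff t \<le> (T - t) * ff 0 + t * ff T" using Tp by (simp add: field_simps)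
    hence "t * ff T \<ge> T * (ff t - ff 0) + t * ff 0" by (simp add: algebra_simps)
    moreover have "t * (c * T) = T * (ff t - ff 0)" unfolding c_def using t0 by simp
    ultimately have "t * (c * T + ff 0) \<le> t * ff T" by (simp add: algebra_simps)
    hence "ff T \<ge> c * T + ff 0" using t0 by simp
    thus ?thesis using ff0 by linarith
  qed
  obtain i :: nat where i: "(8 / c)\<^sup>2 < real i" using reals_Archimedean2 by blast
  define q where "q = sqrt (real (Suc i))"
  have q0: "q > 0" unfolding q_def by simp
  have "8 / c < q" unfolding q_def using i by (intro real_less_rsqrt) simp
  hence qb: "1 / q < c / 8" using c0 q0 by (simp add: field_simps)
  define M where "M = max t (((c/4 + 1) * aa 1) / (c/2))"
  obtain k0 :: nat where k0: "M / translation_length g < real k0" using reals_Archimedean2 by blast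
  define k where "k = max k0 (max 1 (KK (eps i)))"
  have k: "1 \<le> k" "KK (eps i) \<le> k" unfolding k_def by auto
  have "real k0 \<le> real k" unfolding k_def by simp
  hence "real k0 * translation_length g \<le> real k * translation_length g" using tpos by (intro mult_right_mono) auto
  moreover have "M < real k0 * translation_length g" using k0 tpos by (simp add: divide_less_eq)
  ultimately have "M < real k * translation_length g" by linarith
  hence akM: "aa k > M" using aa_lower[of k] by linarith
  have "c * aa k \<le> ff (aa k)" using lowerT[of "aa k"] akM unfolding M_def by simp
  also have "\<dots> \<le> (4 * aa k + 2 * aa 1) / q + aa 1" using ff_at[OF k] unfolding q_def .
  also have "(4 * aa k + 2 * aa 1) / q = (4 * aa k + 2 * aa 1) * (1/q)" by simp
  also have "\<dots> \<le> (4 * aa k + 2 * aa 1) * (c/8)"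
    using qb by (intro mult_left_mono) (auto simp: aa_def)
  finally have "c * aa k \<le> (c/2) * aa k + (c/4) * aa 1 + aa 1" by (simp add: algebra_simps)
  hence "(c/2) * aa k \<le> (c/4 + 1) * aa 1" by (simp add: algebra_simps)
  hence "aa k \<le> ((c/4 + 1) * aa 1) / (c/2)" using c0 by (simp add: field_simps)
  thus False using akM unfolding M_def by simp
qed

lemma gam_asym: "asymptotic (g \<circ> gam) gam"
  unfolding asymptotic_def using ff_bound unfolding ff_def by auto

end

lemma tendsto_fun_pointwise:
  fixes f :: "'b \<Rightarrow> 'a \<Rightarrow> 'c::topological_space"
  assumes "\<And>i. ((\<lambda>n. f n i) \<longlongrightarrow> l i) F"
  shows "(f \<longlongrightarrow> l) F"
proof -
  have "limitin (product_topology (\<lambda>i. euclidean) UNIV) f l F"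
    using assms by (simp add: limitin_componentwise)
  thus ?thesis by (simp add: euclidean_product_topology)
qed

lemma alg_conv:
  fixes D m E C s :: real
  assumes "0 < D" "1 \<le> m" "0 \<le> E" "E \<le> C" "m - C \<le> D" "0 < m - C"
  shows "s\<^sup>2 + s\<^sup>2 - s * s * (D\<^sup>2 + m\<^sup>2 - E\<^sup>2) / (D * m) \<le> s\<^sup>2 * C\<^sup>2 / (m - C)"
proof -
  have m0: "m > 0" using assms by simp
  have eq: "s\<^sup>2 + s\<^sup>2 - s * s * (D\<^sup>2 + m\<^sup>2 - E\<^sup>2) / (D * m) = s\<^sup>2 * (E\<^sup>2 - (D - m)\<^sup>2) / (D * m)"
    using assms(1) m0 by (simp add: field_simps power2_eq_square)
  have "s\<^sup>2 * (E\<^sup>2 - (D - m)\<^sup>2) / (D * m) \<le> s\<^sup>2 * C\<^sup>2 / (D * m)"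
  proof -
    have "E\<^sup>2 \<le> C\<^sup>2" using assms(3,4) by (simp add: power_mono)
    hence "E\<^sup>2 - (D - m)\<^sup>2 \<le> C\<^sup>2" using zero_le_power2[of "D - m"] by linarith
    thus ?thesis using assms(1) m0 by (intro divide_right_mono mult_left_mono) auto
  qed
  also have "\<dots> \<le> s\<^sup>2 * C\<^sup>2 / (m - C)"
  proof -
    have "D \<le> D * m" using assms mult_left_mono[of 1 m D] by simp
    hence "m - C \<le> D * m" using assms by linarith
    thus ?thesis using assms by (intro divide_left_mono) auto
  qed
  finally show ?thesis using eq by simp
qed

lemma seg_conv:
  assumes cat: "CAT0 TYPE('a::metric_space)" and ray: "geodesic_ray \<gamma>" and g0: "\<gamma> 0 = (x0::'a)"
    and seg: "\<And>n. geodesic_segment (\<sigma> n) x0 (y n)" and C: "\<And>n. dist (y n) (\<gamma> (real n)) \<le> C"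
    and s: "0 \<le> s"
  shows "(\<lambda>n. \<sigma> n s) \<longlonglongrightarrow> \<gamma> s"
proof (rule metric_LIMSEQ_I)
  fix r :: real assume r: "r > 0"
  have C0: "0 \<le> C" using C[of 0] zero_le_dist[of "y 0" "\<gamma> (real 0)"] by linarith
  obtain N :: nat where N: "C + s + 1 + s\<^sup>2 * C\<^sup>2 / r\<^sup>2 < real N" using reals_Archimedean2 by blast
  have "\<forall>n\<ge>N. dist (\<sigma> n s) (\<gamma> s) < r"
  proof (intro allI impI)
    fix n assume n: "N \<le> n"
    define m where "m = real n"
    define D where "D = dist x0 (y n)"
    define E where "E = dist (y n) (\<gamma> m)"
    have mN: "real N \<le> m" unfolding m_def using n by simp
    have X0: "0 \<le> s\<^sup>2 * C\<^sup>2 / r\<^sup>2" by simp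
    have m1: "1 \<le> m" using mN N C0 X0 s by linarith
    have dm: "dist x0 (\<gamma> m) = m" using ray_dist0[OF ray, of m] m1 g0 by simp
    have DC: "m - C \<le> D" using dist_triangle[of x0 "\<gamma> m" "y n"] C[of n] dm unfolding D_def E_def m_def
      by (simp add: dist_commute)
    have q: "s\<^sup>2 * C\<^sup>2 / r\<^sup>2 < m - C - s - 1" using N mN by linarith
    have mC: "0 < m - C" using q X0 s by linarith
    have D0: "0 < D" using DC mC by linarith
    have sD: "s \<le> D" "s \<le> m" using q DC C0 X0 by linarith+
    have seg2: "geodesic_segment \<gamma> x0 (\<gamma> m)" using ray_seg[OF ray, of m] m1 g0 by simp
    have "(dist (\<sigma> n s) (\<gamma> s))\<^sup>2 \<le> comparison_dist_sq D m E s s"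
      using CAT0_cmp[OF cat seg[of n] seg2, of s s] s sD dm unfolding D_def E_def by simp
    also have "\<dots> \<le> s\<^sup>2 * C\<^sup>2 / (m - C)" unfolding comparison_dist_sq_def
      using alg_conv[OF D0 m1 _ _ DC mC, of E s] C[of n] unfolding E_def m_def by simp
    also have "\<dots> < r\<^sup>2"
    proof (cases "s\<^sup>2 * C\<^sup>2 = 0")
      case True
      have "s\<^sup>2 * C\<^sup>2 / (m - C) = 0" unfolding True by simp
      moreover have "0 < r\<^sup>2" using r by simp
      ultimately show ?thesis by linarith
    next
      case False
      have "s\<^sup>2 * C\<^sup>2 / r\<^sup>2 < m - C" using q \<open>0 \<le> s\<close> by linarith
      hence "s\<^sup>2 * C\<^sup>2 < (m - C) * r\<^sup>2" using r by (simp add: divide_less_eq)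
      thus ?thesis using mC by (simp add: divide_less_eq mult.commute)
    qed
    finally have "(dist (\<sigma> n s) (\<gamma> s))\<^sup>2 < r\<^sup>2" .
    thus "dist (\<sigma> n s) (\<gamma> s) < r" by (rule power2_less_imp_less[OF _ less_imp_le[OF r]])
  qed
  thus "\<exists>N. \<forall>n\<ge>N. dist (\<sigma> n s) (\<gamma> s) < r" by blast
qed

lemma lemL:
  assumes cat: "CAT0 TYPE('a::metric_space)" and ray: "geodesic_ray \<gamma>" and g0: "\<gamma> 0 = (x0::'a)"
    and far: "\<And>M. eventually (\<lambda>n. M \<le> dist x0 (y n)) sequentially"
    and seg: "\<And>n. geodesic_segment (\<sigma> n) x0 (y n)"
    and conv: "\<And>s. 0 \<le> s \<Longrightarrow> (\<lambda>n. \<sigma> n s) \<longlonglongrightarrow> \<gamma> s"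
  shows "(\<lambda>n. dist x (y n) - dist x0 (y n)) \<longlonglongrightarrow> busemann \<gamma> x"
proof (rule metric_LIMSEQ_I)
  fix e :: real assume e: "e > 0"
  define R where "R = dist x x0"
  define b where "b = busemann \<gamma> x"
  have R0: "R \<ge> 0" unfolding R_def by simp
  have e3: "e/3 > 0" using e by simp
  have "eventually (\<lambda>t. dist (FB \<gamma> x t) b < e/3) at_top"
    using tendstoD[OF bus_tendsto[OF ray, of x] e3] unfolding b_def .
  then obtain T where T: "\<And>t. t \<ge> T \<Longrightarrow> dist (FB \<gamma> x t) b < e/3" unfolding eventually_at_top_linorder by blast
  define s where "s = max T (R + 3 * R\<^sup>2 / (2*e) + 1)"
  have "0 \<le> 3 * R\<^sup>2 / (2*e)" using e by simp
  moreover have "s \<ge> R + 3 * R\<^sup>2 / (2*e) + 1" unfolding s_def by simp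
  ultimately have sR: "s > R" "s \<ge> 0" using R0 by linarith+
  have "dist (FB \<gamma> x s) b < e/3" using T[of s] unfolding s_def by simp
  hence Fs: "FB \<gamma> x s < b + e/3" unfolding dist_real_def abs_less_iff by linarith
  have Rb: "R\<^sup>2 / (2*(s-R)) < e/3"
  proof -
    have "3 * R\<^sup>2 / (2*e) < s - R" unfolding s_def by simp
    hence "3 * R\<^sup>2 < (s - R) * (2*e)" using e by (simp add: divide_less_eq)
    thus ?thesis using sR by (simp add: field_simps)
  qed
  have ev: "eventually (\<lambda>n. dist (\<sigma> n s) (\<gamma> s) < e/3 \<and> s \<le> dist x0 (y n)) sequentially"
    using tendstoD[OF conv[OF sR(2)] e3] far[of s] by (rule eventually_conj)
  then obtain N where N: "\<And>n. n \<ge> N \<Longrightarrow> dist (\<sigma> n s) (\<gamma> s) < e/3 \<and> s \<le> dist x0 (y n)"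
    unfolding eventually_sequentially by blast
  have "\<forall>n\<ge>N. dist (dist x (y n) - dist x0 (y n)) b < e"
  proof (intro allI impI)
    fix n assume "N \<le> n"
    hence "dist (\<sigma> n s) (\<gamma> s) < e/3 \<and> s \<le> dist x0 (y n)" by (rule N)
    hence Nn: "dist (\<sigma> n s) (\<gamma> s) < e/3" "s \<le> dist x0 (y n)" by auto
    have sy: "dist (\<sigma> n s) (y n) = dist x0 (y n) - s" using gs_dist_end[OF seg[of n] sR(2) Nn(2)] .
    have up: "dist x (y n) - dist x0 (y n) \<le> dist x (\<sigma> n s) - s"
      using dist_triangle[of x "y n" "\<sigma> n s"] sy by simp
    have lo: "dist x (\<sigma> n s) - s \<le> dist x (y n) - dist x0 (y n) + R\<^sup>2 / (2*(s-R))"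
      using seg_unif[OF cat seg[of n], of x R s] sR Nn(2) unfolding R_def by simp
    have a1: "dist x (\<sigma> n s) \<le> dist x (\<gamma> s) + dist (\<sigma> n s) (\<gamma> s)" by (rule dist_triangle2)
    have a2: "dist x (\<gamma> s) \<le> dist x (\<sigma> n s) + dist (\<sigma> n s) (\<gamma> s)"
      using dist_triangle2[of x "\<gamma> s" "\<sigma> n s"] by (simp add: dist_commute)
    have t1: "\<bar>dist x (\<sigma> n s) - dist x (\<gamma> s)\<bar> < e/3"
      unfolding abs_less_iff using a1 a2 Nn(1) by linarith
    have bl: "b \<le> FB \<gamma> x s" unfolding b_def using bus_le[OF ray sR(2)] .
    have "dist x (y n) - dist x0 (y n) < b + e" using up t1 Fs unfolding FB_def by linarith
    moreover have "dist x (y n) - dist x0 (y n) > b - e" using lo t1 Rb bl unfolding FB_def by linarith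
    ultimately have "\<bar>(dist x (y n) - dist x0 (y n)) - b\<bar> < e" by (simp add: abs_less_iff)
    thus "dist (dist x (y n) - dist x0 (y n)) b < e" by (simp add: dist_real_def)
  qed
  thus "\<exists>N. \<forall>n\<ge>N. dist (dist x (y n) - dist x0 (y n)) (busemann \<gamma> x) < e" unfolding b_def by blast
qed


context KMset begin

lemma g_inv1: "g (inv g x) = x" using iso unfolding isometry_def bij_def by (simp add: surj_f_inv_f)
lemma g_inv2: "inv g (g x) = x" using iso unfolding isometry_def bij_def by (simp add: inv_f_f)
lemma ginv_dist: "dist (inv g a) (inv g b) = dist a b"
  using gd[of "inv g a" "inv g b"] by (simp add: g_inv1)

lemma bus_g_const: "busemann gam (g x) = busemann gam x + busemann gam (g x0)"
proof -
  define y where "y n = inv g (gam (real n))" for n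
  define \<sigma> where "\<sigma> n = (SOME c. geodesic_segment c x0 (y n))" for n
  have seg: "geodesic_segment (\<sigma> n) x0 (y n)" for n
    unfolding \<sigma>_def using CAT0_geod[OF cat] by (metis someI_ex)
  have C: "dist (y n) (gam (real n)) \<le> ff 0" for n
  proof -
    have "dist (y n) (gam (real n)) = dist (inv g (gam (real n))) (inv g (g (gam (real n))))"
      unfolding y_def by (simp add: g_inv2)
    also have "\<dots> = ff (real n)" unfolding ff_def by (simp add: ginv_dist dist_commute)
    finally show ?thesis using ff_bound[of "real n"] by simp
  qed
  have conv: "\<And>s. 0 \<le> s \<Longrightarrow> (\<lambda>n. \<sigma> n s) \<longlonglongrightarrow> gam s"
    using seg_conv[OF cat gam_ray gam0 seg C] by blast
  have far: "eventually (\<lambda>n. M \<le> dist x0 (y n)) sequentially" for M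
  proof -
    define c0 where "c0 = dist x0 (inv g x0)"
    obtain N :: nat where N: "M + c0 < real N" using reals_Archimedean2 by blast
    have "\<forall>n\<ge>N. M \<le> dist x0 (y n)"
    proof (intro allI impI)
      fix n assume n: "N \<le> n"
      have "dist (inv g x0) (y n) = real n" unfolding y_def ginv_dist
        using ray_dist0[OF gam_ray, of "real n"] gam0 by simp
      moreover have "dist (inv g x0) (y n) \<le> c0 + dist x0 (y n)" unfolding c0_def
        using dist_triangle[of "inv g x0" "y n" x0] by (simp add: dist_commute)
      moreover have "real N \<le> real n" using n by simp
      ultimately show "M \<le> dist x0 (y n)" using N by linarith
    qed
    thus ?thesis unfolding eventually_sequentially by blast
  qed
  have L: "(\<lambda>n. dist z (y n) - dist x0 (y n)) \<longlonglongrightarrow> busemann gam z" for z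
    using lemL[OF cat gam_ray gam0 far seg conv] by blast
  have F: "(\<lambda>n. dist x0 (y n) - real n) \<longlonglongrightarrow> busemann gam (g z) - busemann gam z" for z
  proof -
    have "(\<lambda>n. FB gam (g z) (real n) - (dist z (y n) - dist x0 (y n))) \<longlonglongrightarrow> busemann gam (g z) - busemann gam z"
      by (intro tendsto_diff bus_seq[OF gam_ray] L)
    moreover have "dist z (y n) = dist (g z) (gam (real n))" for n
      unfolding y_def using ginv_dist[of "g z" "gam (real n)"] by (simp add: g_inv2)
    ultimately show ?thesis unfolding FB_def by simp
  qed
  have "busemann gam (g x) - busemann gam x = busemann gam (g x0) - busemann gam x0"
    using LIMSEQ_unique[OF F[of x] F[of x0]] .
  moreover have "busemann gam x0 = 0" using bus_on_ray[OF gam_ray, of 0] gam0 by simp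
  ultimately show ?thesis by simp
qed

lemma bus_x0: "busemann gam x0 = 0" using bus_on_ray[OF gam_ray, of 0] gam0 by simp

lemma bus_iter: "busemann gam ((g^^k) x0) = real k * busemann gam (g x0)"
proof (induction k)
  case 0 thus ?case using bus_x0 by simp
next
  case (Suc k)
  have "busemann gam ((g^^Suc k) x0) = busemann gam (g ((g^^k) x0))" by simp
  also have "\<dots> = busemann gam ((g^^k) x0) + busemann gam (g x0)" by (rule bus_g_const)
  finally show ?case using Suc by (simp add: algebra_simps)
qed

lemma bus_gx0: "busemann gam (g x0) = - translation_length g"
proof -
  let ?c = "busemann gam (g x0)"
  let ?t = "translation_length g"
  have ev: "eventually (\<lambda>n. \<bar>?c + ?t\<bar> \<le> dist ((g^^n) x0) (gam (?t * real n)) / real n) sequentially"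
    unfolding eventually_sequentially
  proof (intro exI[of _ 1] allI impI)
    fix n :: nat assume n: "1 \<le> n"
    have "0 \<le> ?t * real n" using tpos by simp
    hence bt: "busemann gam (gam (?t * real n)) = - (?t * real n)" by (rule bus_on_ray[OF gam_ray])
    have "\<bar>busemann gam ((g^^n) x0) - busemann gam (gam (?t * real n))\<bar> \<le> dist ((g^^n) x0) (gam (?t * real n))"
      by (rule bus_lip[OF gam_ray])
    hence "\<bar>real n * ?c + ?t * real n\<bar> \<le> dist ((g^^n) x0) (gam (?t * real n))" using bus_iter[of n] bt by simp
    moreover have "\<bar>real n * ?c + ?t * real n\<bar> = \<bar>real n * (?c + ?t)\<bar>" by (simp add: algebra_simps)
    moreover have "\<bar>real n * (?c + ?t)\<bar> = real n * \<bar>?c + ?t\<bar>" by (simp add: abs_mult)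
    ultimately have "real n * \<bar>?c + ?t\<bar> \<le> dist ((g^^n) x0) (gam (?t * real n))" by linarith
    hence "\<bar>?c + ?t\<bar> * real n \<le> dist ((g^^n) x0) (gam (?t * real n))" by (simp only: mult.commute)
    moreover have np: "real n > 0" using n by simp
    ultimately show "\<bar>?c + ?t\<bar> \<le> dist ((g^^n) x0) (gam (?t * real n)) / real n" by (simp only: pos_le_divide_eq)
  qed
  have "\<bar>?c + ?t\<bar> \<le> 0" by (rule tendsto_lowerbound[OF track ev sequentially_bot])
  thus ?thesis by simp
qed

lemma bus_equiv: "busemann gam (g x) = busemann gam x - translation_length g"
  using bus_g_const[of x] bus_gx0 by simp

lemma bus_horo: "horofunction x0 (busemann gam)"
  unfolding horofunction_def
proof (intro exI[of _ "\<lambda>n. gam (real n)"] allI impI)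
  fix B :: "'a set" assume "bounded B"
  then obtain R0 where R0: "\<forall>x\<in>B. dist x0 x \<le> R0" using bounded_any_center by blast
  define R where "R = max R0 0"
  have R: "R \<ge> 0" "\<forall>x\<in>B. dist x (gam 0) \<le> R" using R0 gam0 unfolding R_def by (auto simp: dist_commute)
  show "uniform_limit B (\<lambda>n. hfun x0 (gam (real n))) (busemann gam) sequentially"
    unfolding uniform_limit_iff
  proof (intro allI impI)
    fix e :: real assume e: "e > 0"
    obtain N :: nat where N: "R + R\<^sup>2 / (2*e) + 1 < real N" using reals_Archimedean2 by blast
    have "\<forall>n\<ge>N. \<forall>x\<in>B. dist (hfun x0 (gam (real n)) x) (busemann gam x) < e"
    proof (intro allI impI ballI)
      fix n x assume n: "N \<le> n" and x: "x \<in> B"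
      have nN: "real N \<le> real n" using n by simp
      have X0: "0 \<le> R\<^sup>2 / (2*e)" using e by simp
      have nR: "R < real n" using N nN X0 by linarith
      have h: "hfun x0 (gam (real n)) x = FB gam x (real n)"
        unfolding hfun_def FB_def using ray_dist0[OF gam_ray, of "real n"] gam0 by simp
      have lo: "busemann gam x \<le> FB gam x (real n)" using bus_le[OF gam_ray] by simp
      have up: "FB gam x (real n) - busemann gam x \<le> R\<^sup>2 / (2*(real n - R))"
        using bus_unif[OF cat gam_ray _ nR] R x by blast
      have "R\<^sup>2 / (2*e) < real n - R" using N nN by linarith
      hence "R\<^sup>2 < (real n - R) * (2*e)" using e by (simp add: divide_less_eq)
      hence "R\<^sup>2 / (2*(real n - R)) < e" using nR by (simp add: field_simps)
      hence "\<bar>FB gam x (real n) - busemann gam x\<bar> < e" using lo up by (simp add: abs_less_iff)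
      thus "dist (hfun x0 (gam (real n)) x) (busemann gam x) < e" unfolding h dist_real_def .
    qed
    thus "\<forall>\<^sub>F n in sequentially. \<forall>x\<in>B. dist (hfun x0 (gam (real n)) x) (busemann gam x) < e"
      unfolding eventually_sequentially by blast
  qed
qed

lemma bus_mf: "metric_functional x0 (busemann gam)"
  unfolding metric_functional_def
proof
  show "\<forall>x y. \<bar>busemann gam x - busemann gam y\<bar> \<le> dist x y" using bus_lip[OF gam_ray] by blast
  have T: "(\<lambda>n. hfun x0 (gam (real n))) \<longlonglongrightarrow> busemann gam"
  proof (rule tendsto_fun_pointwise)
    fix x
    have "hfun x0 (gam (real n)) x = FB gam x (real n)" for n
      unfolding hfun_def FB_def using ray_dist0[OF gam_ray, of "real n"] gam0 by simp
    thus "(\<lambda>n. hfun x0 (gam (real n)) x) \<longlonglongrightarrow> busemann gam x" using bus_seq[OF gam_ray, of x] by simp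
  qed
  show "busemann gam \<in> closure (range (hfun x0))"
  proof (rule Lim_in_closed_set[OF closed_closure _ _ T])
    show "sequentially \<noteq> bot" by simp
    show "\<forall>\<^sub>F n in sequentially. hfun x0 (gam (real n)) \<in> closure (range (hfun x0))"
      by (intro always_eventually allI subsetD[OF closure_subset] rangeI)
  qed
qed

lemma bus_fa: "functional_action x0 g (busemann gam) = busemann gam"
proof
  fix x
  have "busemann gam (inv g z) = busemann gam z + translation_length g" for z
    using bus_equiv[of "inv g z"] by (simp add: g_inv1)
  thus "functional_action x0 g (busemann gam) x = busemann gam x"
    unfolding functional_action_def using bus_x0 by simp
qed

end

lemma alg_G:
  fixes s D E e :: real
  assumes "0 < s" "0 < D" "s \<le> D" "0 \<le> E" "E \<le> D - s + e" "0 \<le> e"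
  shows "s\<^sup>2 + s\<^sup>2 - s * s * (s\<^sup>2 + D\<^sup>2 - E\<^sup>2) / (s * D) \<le> s * e\<^sup>2 / D + 2 * e * s"
proof -
  have E2: "E\<^sup>2 \<le> (D - s + e)\<^sup>2" using assms by (intro power_mono) auto
  have eq1: "s\<^sup>2 + s\<^sup>2 - s * s * (s\<^sup>2 + D\<^sup>2 - E\<^sup>2) / (s * D) = 2 * s\<^sup>2 - s * (s\<^sup>2 + D\<^sup>2 - E\<^sup>2) / D"
    using assms(1,2) by (simp add: field_simps power2_eq_square)
  have "s * (s\<^sup>2 + D\<^sup>2 - (D - s + e)\<^sup>2) / D \<le> s * (s\<^sup>2 + D\<^sup>2 - E\<^sup>2) / D"
    using E2 assms(1,2) by (intro divide_right_mono mult_left_mono) auto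
  moreover have "2 * s\<^sup>2 - s * (s\<^sup>2 + D\<^sup>2 - (D - s + e)\<^sup>2) / D = s * e\<^sup>2 / D + 2 * e * s - 2 * s\<^sup>2 * e / D"
    using assms(2) by (simp add: field_simps power2_eq_square)
  moreover have "0 \<le> 2 * s\<^sup>2 * e / D" using assms by simp
  ultimately show ?thesis using eq1 by linarith
qed

lemma lemG:
  assumes cat: "CAT0 TYPE('a::metric_space)" and c: "geodesic_segment c (x0::'a) z"
    and D: "0 < dist x0 z" and s: "0 \<le> s" "s \<le> dist x0 z" and p: "dist x0 p = s"
    and pz: "dist p z \<le> dist x0 z - s + e" and e: "0 \<le> e"
  shows "(dist p (c s))\<^sup>2 \<le> s * e\<^sup>2 / dist x0 z + 2 * e * s"
proof (cases "s = 0")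
  case True
  hence "p = x0" "c s = x0" using p gs_start[OF c] by auto
  thus ?thesis using True by simp
next
  case False
  hence s0: "0 < s" using s by simp
  obtain c1 where c1: "geodesic_segment c1 x0 p" using CAT0_geod[OF cat] by blast
  have c1s: "c1 s = p" using gs_end[OF c1] p by simp
  have "(dist (c1 s) (c s))\<^sup>2 \<le> comparison_dist_sq (dist x0 p) (dist x0 z) (dist p z) s s"
    using CAT0_cmp[OF cat c1 c, of s s] s p by simp
  also have "\<dots> \<le> s * e\<^sup>2 / dist x0 z + 2 * e * s" unfolding comparison_dist_sq_def p
    by (rule alg_G[OF s0 D s(2) zero_le_dist pz e])
  finally show ?thesis using c1s by simp
qed

lemma bus_convex:
  assumes cat: "CAT0 TYPE('a::metric_space)" and ray: "geodesic_ray \<delta>"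
    and c: "geodesic_segment c (x::'a) y" and u: "0 \<le> u" "u \<le> 1"
  shows "busemann \<delta> (c (u * dist x y)) \<le> (1 - u) * busemann \<delta> x + u * busemann \<delta> y"
proof -
  have ev: "eventually (\<lambda>T. FB \<delta> (c (u * dist x y)) T \<le> (1 - u) * FB \<delta> x T + u * FB \<delta> y T) at_top"
  proof (rule always_eventually, rule allI)
    fix T
    have "dist (c (u * dist x y)) ((\<lambda>_. \<delta> T) (u * dist (\<delta> T) (\<delta> T))) \<le> (1 - u) * dist x (\<delta> T) + u * dist y (\<delta> T)"
      by (rule lemB[OF cat c gs_const u])
    thus "FB \<delta> (c (u * dist x y)) T \<le> (1 - u) * FB \<delta> x T + u * FB \<delta> y T"
      unfolding FB_def by (simp add: algebra_simps)
  qed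
  have T1: "((\<lambda>T. (1 - u) * FB \<delta> x T + u * FB \<delta> y T) \<longlongrightarrow> (1 - u) * busemann \<delta> x + u * busemann \<delta> y) at_top"
    by (intro tendsto_add tendsto_mult tendsto_const bus_tendsto[OF ray])
  show ?thesis by (rule tendsto_le[OF trivial_limit_at_top_linorder T1 bus_tendsto[OF ray] ev])
qed

lemma asym_trans: "asymptotic a b \<Longrightarrow> asymptotic b c \<Longrightarrow> asymptotic a c"
  unfolding asymptotic_def
proof (elim exE)
  fix C1 C2 assume H: "\<forall>t\<ge>0. dist (a t) (b t) \<le> C1" "\<forall>t\<ge>0. dist (b t) (c t) \<le> C2"
  have "\<forall>t\<ge>0. dist (a t) (c t) \<le> C1 + C2"
  proof (intro allI impI)
    fix t :: real assume "0 \<le> t"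
    hence "dist (a t) (b t) \<le> C1" "dist (b t) (c t) \<le> C2" using H by auto
    thus "dist (a t) (c t) \<le> C1 + C2" using dist_triangle[of "a t" "c t" "b t"] by linarith
  qed
  thus "\<exists>C. \<forall>t\<ge>0. dist (a t) (c t) \<le> C" by blast
qed

lemma asym_sym: "asymptotic a b \<Longrightarrow> asymptotic b a"
  unfolding asymptotic_def by (simp add: dist_commute)

lemma asym_refl: "asymptotic a a"
  unfolding asymptotic_def by (intro exI[of _ 0]) simp


context KMset begin

lemma ray_unique:
  assumes r: "geodesic_ray \<gamma>" and g0: "\<gamma> 0 = x0" and a: "asymptotic \<gamma> gam" and t: "0 \<le> t"
  shows "\<gamma> t = gam t"
proof -
  obtain C where C: "\<forall>t\<ge>0. dist (\<gamma> t) (gam t) \<le> C" using a unfolding asymptotic_def by blast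
  have seg: "geodesic_segment \<gamma> x0 (\<gamma> (real n))" for n using ray_seg[OF r, of "real n"] g0 by simp
  have Cn: "\<And>n. dist (\<gamma> (real n)) (gam (real n)) \<le> C" using C by simp
  have "(\<lambda>n. \<gamma> t) \<longlonglongrightarrow> gam t"
    using seg_conv[where \<sigma>="\<lambda>n. \<gamma>" and y="\<lambda>n. \<gamma> (real n)" and C=C, OF cat gam_ray gam0 seg Cn t] .
  thus ?thesis using LIMSEQ_const_iff by blast
qed

lemma phi_zero:
  assumes ray: "geodesic_ray \<delta>" and b0: "busemann \<delta> x0 = 0"
    and eq: "\<And>x. busemann \<delta> (g x) = busemann \<delta> x - translation_length g"
    and s: "0 \<le> s"
  shows "busemann \<delta> (gam s) = - s"
proof -
  let ?t = "translation_length g"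
  define \<phi> where "\<phi> r = busemann \<delta> (gam r) + r" for r
  have phi_ge: "\<phi> r \<ge> 0" if "0 \<le> r" for r
  proof -
    have "\<bar>busemann \<delta> (gam r) - busemann \<delta> (gam 0)\<bar> \<le> dist (gam r) (gam 0)" by (rule bus_lip[OF ray])
    moreover have "dist (gam r) (gam 0) = r" using ray_dist0[OF gam_ray that] by (simp add: dist_commute)
    ultimately show ?thesis unfolding \<phi>_def using b0 gam0 by (simp add: abs_le_iff)
  qed
  have iter: "busemann \<delta> ((g^^k) x0) = - real k * ?t" for k
  proof (induction k)
    case 0 thus ?case using b0 by simp
  next
    case (Suc k) thus ?case using eq[of "(g^^k) x0"] by (simp add: algebra_simps)
  qed
  have phi_track: "\<phi> (?t * real k) \<le> dist ((g^^k) x0) (gam (?t * real k))" for k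
  proof -
    have "\<bar>busemann \<delta> (gam (?t * real k)) - busemann \<delta> ((g^^k) x0)\<bar> \<le> dist (gam (?t * real k)) ((g^^k) x0)"
      by (rule bus_lip[OF ray])
    thus ?thesis unfolding \<phi>_def using iter[of k] by (simp add: abs_le_iff dist_commute algebra_simps)
  qed
  have conv: "\<phi> t0 \<le> (t0 / T) * \<phi> T" if "0 < t0" "t0 \<le> T" for t0 T
  proof -
    have Tp: "T > 0" using that by simp
    have seg: "geodesic_segment gam (gam 0) (gam T)" using ray_seg[OF gam_ray] Tp by simp
    have d: "dist (gam 0) (gam T) = T" using ray_dist0[OF gam_ray] Tp by simp
    have "busemann \<delta> (gam ((t0/T) * dist (gam 0) (gam T))) \<le> (1 - t0/T) * busemann \<delta> (gam 0) + (t0/T) * busemann \<delta> (gam T)"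
      by (rule bus_convex[OF cat ray seg]) (use that Tp in auto)
    hence "busemann \<delta> (gam t0) \<le> (t0/T) * busemann \<delta> (gam T)" using d Tp b0 gam0 by simp
    thus ?thesis unfolding \<phi>_def using Tp by (simp add: algebra_simps)
  qed
  have "\<phi> s \<le> 0"
  proof (rule ccontr)
    assume "\<not> \<phi> s \<le> 0"
    hence ps: "\<phi> s > 0" by simp
    have "s \<noteq> 0" using ps b0 gam0 unfolding \<phi>_def by auto
    hence s0: "s > 0" using s by simp
    define c where "c = \<phi> s / s"
    have c0: "c > 0" unfolding c_def using ps s0 by simp
    have ev: "eventually (\<lambda>k. c * ?t \<le> dist ((g^^k) x0) (gam (?t * real k)) / real k) sequentially"
    proof -
      obtain K :: nat where K: "s / ?t < real K" using reals_Archimedean2 by blast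
      have "\<forall>k\<ge>max K 1. c * ?t \<le> dist ((g^^k) x0) (gam (?t * real k)) / real k"
      proof (intro allI impI)
        fix k assume k: "max K 1 \<le> k"
        have kp: "real k > 0" using k by simp
        have "real K \<le> real k" using k by simp
        hence "?t * real K \<le> ?t * real k" using tpos by (intro mult_left_mono) auto
        moreover have "s < ?t * real K" using K tpos by (simp add: divide_less_eq mult.commute)
        ultimately have "s < ?t * real k" by linarith
        hence "\<phi> s \<le> (s / (?t * real k)) * \<phi> (?t * real k)" using conv[OF s0] by simp
        hence "\<phi> s * (?t * real k) \<le> s * \<phi> (?t * real k)" using s0 tpos kp by (simp add: field_simps)
        hence "c * s * (?t * real k) \<le> s * \<phi> (?t * real k)" unfolding c_def using s0 by simp
        hence "c * (?t * real k) \<le> \<phi> (?t * real k)" using s0 by (simp add: algebra_simps)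
        hence "c * ?t * real k \<le> dist ((g^^k) x0) (gam (?t * real k))" using phi_track[of k] by (simp add: algebra_simps)
        thus "c * ?t \<le> dist ((g^^k) x0) (gam (?t * real k)) / real k" using kp by (simp add: pos_le_divide_eq)
      qed
      thus ?thesis unfolding eventually_sequentially by blast
    qed
    have "c * ?t \<le> 0" by (rule tendsto_lowerbound[OF track ev sequentially_bot])
    moreover have "c * ?t > 0" using c0 tpos by (rule mult_pos_pos)
    ultimately show False by linarith
  qed
  thus ?thesis using phi_ge[OF s] unfolding \<phi>_def by simp
qed

end

context KMset begin

lemma uniq:
  assumes horo: "horofunction x0 h" and eqh: "\<forall>x. h (g x) = h x - translation_length g"
  shows "h = busemann gam"
proof -
  let ?t = "translation_length g"
  obtain y where U: "\<And>B. bounded B \<Longrightarrow> uniform_limit B (\<lambda>n. hfun x0 (y n)) h sequentially"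
    using horo unfolding horofunction_def by blast
  have pw: "(\<lambda>n. hfun x0 (y n) x) \<longlonglongrightarrow> h x" for x
    by (rule tendsto_uniform_limitI[OF U[of "{x}"]]) auto
  have h0: "h x0 = 0"
  proof -
    have "(\<lambda>n. hfun x0 (y n) x0) = (\<lambda>n. 0)" unfolding hfun_def by simp
    thus ?thesis using pw[of x0] LIMSEQ_unique[OF _ tendsto_const] by simp
  qed
  have hk: "h ((g^^k) x0) = - real k * ?t" for k
  proof (induction k)
    case 0 thus ?case using h0 by simp
  next
    case (Suc k)
    have "h ((g^^Suc k) x0) = h ((g^^k) x0) - ?t" using eqh by simp
    thus ?case using Suc by (simp add: algebra_simps)
  qed
  have far: "eventually (\<lambda>n. M \<le> dist x0 (y n)) sequentially" for M
  proof (rule ccontr)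
    assume "\<not> ?thesis"
    hence fr: "\<forall>N. \<exists>n\<ge>N. dist x0 (y n) < M" unfolding eventually_sequentially by (simp add: not_le)
    obtain k :: nat where k: "(M + 1) / ?t < real k" using reals_Archimedean2 by blast
    hence kM: "M + 1 < real k * ?t" using tpos by (simp add: divide_less_eq)
    define x where "x = (g^^k) x0"
    have "eventually (\<lambda>n. dist (hfun x0 (y n) x) (h x) < 1) sequentially"
      by (rule tendstoD[OF pw]) simp
    then obtain N where N: "\<And>n. n \<ge> N \<Longrightarrow> dist (hfun x0 (y n) x) (h x) < 1"
      unfolding eventually_sequentially by blast
    obtain n where n: "n \<ge> N" "dist x0 (y n) < M" using fr by blast
    have "hfun x0 (y n) x \<ge> - dist x0 (y n)" unfolding hfun_def by simp
    moreover have "h x = - real k * ?t" unfolding x_def by (rule hk)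
    moreover have "\<bar>hfun x0 (y n) x - h x\<bar> < 1" using N[OF n(1)] by (simp add: dist_real_def)
    ultimately show False using n(2) kM by (simp add: abs_less_iff)
  qed
  define \<sigma> where "\<sigma> n = (SOME c. geodesic_segment c x0 (y n))" for n
  have seg: "geodesic_segment (\<sigma> n) x0 (y n)" for n
    unfolding \<sigma>_def using CAT0_geod[OF cat] by (metis someI_ex)
  have cauchy: "Cauchy (\<lambda>n. \<sigma> n s)" if s: "0 \<le> s" for s
  proof (rule metric_CauchyI)
    fix e :: real assume e: "e > 0"
    define \<epsilon> where "\<epsilon> = min 1 (e\<^sup>2 / (16 * (s + 1)))"
    have \<epsilon>: "0 < \<epsilon>" "\<epsilon> \<le> 1" "\<epsilon> \<le> e\<^sup>2 / (16 * (s + 1))" unfolding \<epsilon>_def using e s by auto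
    have "eventually (\<lambda>n. \<forall>p\<in>cball x0 s. dist (hfun x0 (y n) p) (h p) < \<epsilon>) sequentially"
      using U[OF bounded_cball] \<epsilon>(1) unfolding uniform_limit_iff by blast
    hence "eventually (\<lambda>n. (\<forall>p\<in>cball x0 s. dist (hfun x0 (y n) p) (h p) < \<epsilon>) \<and> s + 1 \<le> dist x0 (y n)) sequentially"
      using far[of "s+1"] by (rule eventually_conj)
    then obtain N where N: "\<And>n. n \<ge> N \<Longrightarrow> (\<forall>p\<in>cball x0 s. dist (hfun x0 (y n) p) (h p) < \<epsilon>) \<and> s + 1 \<le> dist x0 (y n)"
      unfolding eventually_sequentially by blast
    have "\<forall>m\<ge>N. \<forall>n\<ge>N. dist (\<sigma> m s) (\<sigma> n s) < e"
    proof (intro allI impI)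
      fix m n assume mn: "N \<le> m" "N \<le> n"
      have Nm: "\<forall>p\<in>cball x0 s. dist (hfun x0 (y m) p) (h p) < \<epsilon>" "s + 1 \<le> dist x0 (y m)" using N[OF mn(1)] by auto
      have Nn: "\<forall>p\<in>cball x0 s. dist (hfun x0 (y n) p) (h p) < \<epsilon>" "s + 1 \<le> dist x0 (y n)" using N[OF mn(2)] by auto
      define p where "p = \<sigma> m s"
      have sm: "s \<le> dist x0 (y m)" using Nm(2) by linarith
      have sn: "s \<le> dist x0 (y n)" using Nn(2) by linarith
      have px: "dist x0 p = s" unfolding p_def by (rule gs_dist_start[OF seg s sm])
      have pB: "p \<in> cball x0 s" using px by simp
      have hm: "hfun x0 (y m) p = - s" unfolding hfun_def p_def using gs_dist_end[OF seg s sm] by simp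
      have a1: "\<bar>hfun x0 (y m) p - h p\<bar> < \<epsilon>" using Nm(1) pB by (simp add: dist_real_def)
      have a2: "\<bar>hfun x0 (y n) p - h p\<bar> < \<epsilon>" using Nn(1) pB by (simp add: dist_real_def)
      have pz: "dist p (y n) \<le> dist x0 (y n) - s + 2 * \<epsilon>"
        using a1 a2 hm unfolding hfun_def abs_less_iff by linarith
      have D0: "0 < dist x0 (y n)" using Nn(2) s by linarith
      have "(dist p (\<sigma> n s))\<^sup>2 \<le> s * (2 * \<epsilon>)\<^sup>2 / dist x0 (y n) + 2 * (2 * \<epsilon>) * s"
        by (rule lemG[OF cat seg D0 s sn px pz]) (use \<epsilon> in simp)
      also have "s * (2 * \<epsilon>)\<^sup>2 / dist x0 (y n) \<le> s * (4 * \<epsilon>)"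
      proof -
        have "(2 * \<epsilon>)\<^sup>2 = 4 * \<epsilon> * \<epsilon>" by (simp add: power2_eq_square)
        also have "\<dots> \<le> 4 * \<epsilon> * dist x0 (y n)" using \<epsilon> Nn(2) s by (intro mult_left_mono) auto
        finally have "(2 * \<epsilon>)\<^sup>2 / dist x0 (y n) \<le> 4 * \<epsilon>" using D0 by (simp add: divide_le_eq)
        hence "s * ((2 * \<epsilon>)\<^sup>2 / dist x0 (y n)) \<le> s * (4 * \<epsilon>)" using s by (rule mult_left_mono)
        thus ?thesis by simp
      qed
      finally have "(dist p (\<sigma> n s))\<^sup>2 \<le> 8 * \<epsilon> * s" by simp
      also have "\<dots> \<le> 8 * (e\<^sup>2 / (16 * (s + 1))) * s" using \<epsilon> s by (intro mult_right_mono) auto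
      also have "\<dots> < e\<^sup>2"
      proof -
        have "8 * (e\<^sup>2 / (16 * (s + 1))) * s = e\<^sup>2 * (s / (2 * (s + 1)))" using s by (simp add: field_simps)
        also have "s / (2 * (s + 1)) < 1" using s by (simp add: divide_less_eq)
        hence "e\<^sup>2 * (s / (2 * (s + 1))) < e\<^sup>2 * 1" using e by (intro mult_strict_left_mono) auto
        finally show ?thesis by simp
      qed
      finally have "(dist p (\<sigma> n s))\<^sup>2 < e\<^sup>2" .
      thus "dist (\<sigma> m s) (\<sigma> n s) < e" unfolding p_def by (rule power2_less_imp_less[OF _ less_imp_le[OF e]])
    qed
    thus "\<exists>N. \<forall>m\<ge>N. \<forall>n\<ge>N. dist (\<sigma> m s) (\<sigma> n s) < e" by blast
  qed
  define \<delta> where "\<delta> s = lim (\<lambda>n. \<sigma> n s)" for s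
  have conv: "(\<lambda>n. \<sigma> n s) \<longlonglongrightarrow> \<delta> s" if "0 \<le> s" for s
    using Cauchy_convergent[OF cauchy[OF that]] unfolding \<delta>_def by (simp add: convergent_LIMSEQ_iff)
  have dray: "geodesic_ray \<delta>"
    unfolding geodesic_ray_def
  proof (intro allI impI)
    fix s t :: real assume st: "0 \<le> s" "0 \<le> t"
    have T: "(\<lambda>n. dist (\<sigma> n s) (\<sigma> n t)) \<longlonglongrightarrow> dist (\<delta> s) (\<delta> t)"
      by (intro tendsto_dist conv st)
    have "eventually (\<lambda>n. dist (\<sigma> n s) (\<sigma> n t) = \<bar>s - t\<bar>) sequentially"
      using far[of "max s t"]
    proof (rule eventually_mono)
      fix n assume "max s t \<le> dist x0 (y n)"
      thus "dist (\<sigma> n s) (\<sigma> n t) = \<bar>s - t\<bar>" using gs_dist[OF seg] st by simp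
    qed
    hence "(\<lambda>n. dist (\<sigma> n s) (\<sigma> n t)) \<longlonglongrightarrow> \<bar>s - t\<bar>" by (rule tendsto_eventually)
    thus "dist (\<delta> s) (\<delta> t) = \<bar>s - t\<bar>" using LIMSEQ_unique[OF T] by simp
  qed
  have d0: "\<delta> 0 = x0"
  proof -
    have "(\<lambda>n. \<sigma> n 0) = (\<lambda>n. x0)" using gs_start[OF seg] by auto
    hence "(\<lambda>n. \<sigma> n 0) \<longlonglongrightarrow> x0" by simp
    thus ?thesis using LIMSEQ_unique[OF conv[of 0]] by simp
  qed
  have hb: "h = busemann \<delta>"
  proof
    fix x
    have "(\<lambda>n. dist x (y n) - dist x0 (y n)) \<longlonglongrightarrow> busemann \<delta> x"
      by (rule lemL[OF cat dray d0 far seg conv])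
    thus "h x = busemann \<delta> x" using pw[of x] LIMSEQ_unique unfolding hfun_def by blast
  qed
  have b0: "busemann \<delta> x0 = 0" using h0 hb by simp
  have beq: "\<And>x. busemann \<delta> (g x) = busemann \<delta> x - ?t" using eqh hb by simp
  have bg: "busemann \<delta> (gam s) = - s" if "0 \<le> s" for s by (rule phi_zero[OF dray b0 beq that])
  have same: "\<forall>s\<ge>0. \<delta> s = gam s"
  proof (intro allI impI)
    fix s :: real assume s: "0 \<le> s"
    show "\<delta> s = gam s"
    proof (cases "s = 0")
      case True thus ?thesis using d0 gam0 by simp
    next
      case False
      hence s0: "s > 0" using s by simp
      have "(dist (gam s) (\<delta> s))\<^sup>2 \<le> 0"
      proof (rule field_le_epsilon)
        fix e :: real assume e: "e > 0"
        define \<epsilon> where "\<epsilon> = min 1 (e / (1 + 2 * s))"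
        have \<epsilon>: "0 < \<epsilon>" "\<epsilon> \<le> 1" "\<epsilon> \<le> e / (1 + 2 * s)" unfolding \<epsilon>_def using e s by auto
        have "eventually (\<lambda>t. dist (FB \<delta> (gam s) t) (busemann \<delta> (gam s)) < \<epsilon>) at_top"
          by (rule tendstoD[OF bus_tendsto[OF dray] \<epsilon>(1)])
        then obtain T where T: "\<And>t. t \<ge> T \<Longrightarrow> dist (FB \<delta> (gam s) t) (busemann \<delta> (gam s)) < \<epsilon>"
          unfolding eventually_at_top_linorder by blast
        define t where "t = max T s"
        have ts: "s \<le> t" "T \<le> t" unfolding t_def by auto
        have t0: "0 < t" using ts s0 by linarith
        have "\<bar>FB \<delta> (gam s) t - (- s)\<bar> < \<epsilon>" using T[OF ts(2)] bg[OF s] by (simp add: dist_real_def)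
        hence pz: "dist (gam s) (\<delta> t) \<le> dist x0 (\<delta> t) - s + \<epsilon>"
          using ray_dist0[OF dray, of t] t0 d0 unfolding FB_def abs_less_iff by simp
        have segd: "geodesic_segment \<delta> x0 (\<delta> t)" using ray_seg[OF dray, of t] t0 d0 by simp
        have dt: "dist x0 (\<delta> t) = t" using ray_dist0[OF dray, of t] t0 d0 by simp
        have px: "dist x0 (gam s) = s" using ray_dist0[OF gam_ray s] gam0 by simp
        have "(dist (gam s) (\<delta> s))\<^sup>2 \<le> s * \<epsilon>\<^sup>2 / dist x0 (\<delta> t) + 2 * \<epsilon> * s"
          by (rule lemG[OF cat segd _ s _ px pz]) (use dt t0 ts \<epsilon> in auto)
        also have "s * \<epsilon>\<^sup>2 / dist x0 (\<delta> t) \<le> \<epsilon>"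
        proof -
          have "s / t \<le> 1" using ts t0 by simp
          moreover have "\<epsilon>\<^sup>2 \<le> \<epsilon>" using \<epsilon> by (simp add: power2_eq_square mult_left_le_one_le)
          ultimately have "(s / t) * \<epsilon>\<^sup>2 \<le> 1 * \<epsilon>" using \<epsilon> s t0 by (intro mult_mono) auto
          thus ?thesis using dt by simp
        qed
        finally have "(dist (gam s) (\<delta> s))\<^sup>2 \<le> \<epsilon> * (1 + 2 * s)" by (simp add: algebra_simps)
        also have "\<dots> \<le> e" using \<epsilon>(3) s by (simp add: pos_le_divide_eq mult.commute)
        finally show "(dist (gam s) (\<delta> s))\<^sup>2 \<le> 0 + e" by simp
      qed
      thus ?thesis by simp
    qed
  qed
  have "busemann \<delta> = busemann gam" by (rule bus_cong[OF dray gam_ray same])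
  thus ?thesis using hb by simp
qed

end

context KMset begin

lemma main:
  "\<exists>\<xi>\<in>visual_boundary TYPE('a). boundary_action g \<xi> = \<xi> \<and>
           (\<exists>\<gamma>\<in>\<xi>. \<gamma> 0 = x0) \<and>
           (\<forall>\<gamma>\<in>\<xi>. \<gamma> 0 = x0 \<longrightarrow>
              metric_functional x0 (busemann \<gamma>) \<and>
              functional_action x0 g (busemann \<gamma>) = busemann \<gamma> \<and>
              horofunction x0 (busemann \<gamma>) \<and>
              (\<forall>x. busemann \<gamma> (g x) = busemann \<gamma> x - translation_length g) \<and>
              (\<forall>h. horofunction x0 h \<and> (\<forall>x. h (g x) = h x - translation_length g)
                   \<longrightarrow> h = busemann \<gamma>) \<and>
              (\<lambda>n. dist ((g ^^ n) x0) (\<gamma> (translation_length g * real n)) / real n)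
                 \<longlonglongrightarrow> 0)"
proof -
  define \<xi> where "\<xi> = {\<delta>. geodesic_ray \<delta> \<and> asymptotic \<delta> gam}"
  have mem: "\<xi> \<in> visual_boundary TYPE('a)" unfolding visual_boundary_def \<xi>_def using gam_ray by blast
  have ray_g: "geodesic_ray (g \<circ> \<delta>)" if "geodesic_ray \<delta>" for \<delta>
    using that unfolding geodesic_ray_def by (simp add: gd)
  have ray_gi: "geodesic_ray (inv g \<circ> \<delta>)" if "geodesic_ray \<delta>" for \<delta>
    using that unfolding geodesic_ray_def by (simp add: ginv_dist)
  have asym_g: "asymptotic (g \<circ> a) (g \<circ> b)" if "asymptotic a b" for a b
    using that unfolding asymptotic_def by (simp add: gd)
  have asym_gi: "asymptotic (inv g \<circ> a) (inv g \<circ> b)" if "asymptotic a b" for a b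
    using that unfolding asymptotic_def by (simp add: ginv_dist)
  have act: "boundary_action g \<xi> = \<xi>"
    unfolding boundary_action_def
  proof
    show "(\<circ>) g ` \<xi> \<subseteq> \<xi>"
    proof
      fix z assume "z \<in> (\<circ>) g ` \<xi>"
      then obtain \<delta> where d: "\<delta> \<in> \<xi>" "z = g \<circ> \<delta>" by blast
      have "asymptotic (g \<circ> \<delta>) gam" using asym_trans[OF asym_g gam_asym] d unfolding \<xi>_def by blast
      thus "z \<in> \<xi>" using d ray_g unfolding \<xi>_def by blast
    qed
  next
    show "\<xi> \<subseteq> (\<circ>) g ` \<xi>"
    proof
      fix \<delta> assume d: "\<delta> \<in> \<xi>"
      have a1: "asymptotic \<delta> (g \<circ> gam)" using asym_trans[OF _ asym_sym[OF gam_asym]] d unfolding \<xi>_def by blast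
      have "inv g \<circ> (g \<circ> gam) = gam" by (auto simp: g_inv2)
      hence "asymptotic (inv g \<circ> \<delta>) gam" using asym_gi[OF a1] by simp
      hence "inv g \<circ> \<delta> \<in> \<xi>" using d ray_gi unfolding \<xi>_def by blast
      moreover have "\<delta> = g \<circ> (inv g \<circ> \<delta>)" by (auto simp: g_inv1)
      ultimately show "\<delta> \<in> (\<circ>) g ` \<xi>" by blast
    qed
  qed
  have ex: "\<exists>\<gamma>\<in>\<xi>. \<gamma> 0 = x0" using gam_ray asym_refl gam0 unfolding \<xi>_def by blast
  have all: "\<forall>\<gamma>\<in>\<xi>. \<gamma> 0 = x0 \<longrightarrow>
              metric_functional x0 (busemann \<gamma>) \<and>
              functional_action x0 g (busemann \<gamma>) = busemann \<gamma> \<and>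
              horofunction x0 (busemann \<gamma>) \<and>
              (\<forall>x. busemann \<gamma> (g x) = busemann \<gamma> x - translation_length g) \<and>
              (\<forall>h. horofunction x0 h \<and> (\<forall>x. h (g x) = h x - translation_length g)
                   \<longrightarrow> h = busemann \<gamma>) \<and>
              (\<lambda>n. dist ((g ^^ n) x0) (\<gamma> (translation_length g * real n)) / real n)
                 \<longlonglongrightarrow> 0"
  proof (intro ballI impI)
    fix \<gamma> assume g: "\<gamma> \<in> \<xi>" "\<gamma> 0 = x0"
    have gr: "geodesic_ray \<gamma>" "asymptotic \<gamma> gam" using g unfolding \<xi>_def by auto
    have same: "\<forall>t\<ge>0. \<gamma> t = gam t" using ray_unique[OF gr(1) g(2) gr(2)] by blast
    have bb: "busemann \<gamma> = busemann gam" by (rule bus_cong[OF gr(1) gam_ray same])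
    have tr: "(\<lambda>n. dist ((g ^^ n) x0) (\<gamma> (translation_length g * real n)) / real n) = 
              (\<lambda>n. dist ((g ^^ n) x0) (gam (translation_length g * real n)) / real n)"
    proof
      fix n
      have "0 \<le> translation_length g * real n" using tpos by simp
      thus "dist ((g ^^ n) x0) (\<gamma> (translation_length g * real n)) / real n =
            dist ((g ^^ n) x0) (gam (translation_length g * real n)) / real n" using same by simp
    qed
    show "metric_functional x0 (busemann \<gamma>) \<and>
              functional_action x0 g (busemann \<gamma>) = busemann \<gamma> \<and>
              horofunction x0 (busemann \<gamma>) \<and>
              (\<forall>x. busemann \<gamma> (g x) = busemann \<gamma> x - translation_length g) \<and>
              (\<forall>h. horofunction x0 h \<and> (\<forall>x. h (g x) = h x - translation_length g)
                   \<longrightarrow> h = busemann \<gamma>) \<and>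
              (\<lambda>n. dist ((g ^^ n) x0) (\<gamma> (translation_length g * real n)) / real n)
                 \<longlonglongrightarrow> 0"
      unfolding bb tr using bus_mf bus_fa bus_horo bus_equiv uniq track by blast
  qed
  show ?thesis using mem act ex all by blast
qed

end

theorem theorem20:
  fixes x0 :: "'a::complete_space" and g :: "'a \<Rightarrow> 'a"
  assumes "CAT0 TYPE('a)"
    and "isometry g"
    and "translation_length g > 0"
  shows "\<exists>\<xi>\<in>visual_boundary TYPE('a). boundary_action g \<xi> = \<xi> \<and>
           (\<exists>\<gamma>\<in>\<xi>. \<gamma> 0 = x0) \<and>
           (\<forall>\<gamma>\<in>\<xi>. \<gamma> 0 = x0 \<longrightarrow>
              metric_functional x0 (busemann \<gamma>) \<and>
              functional_action x0 g (busemann \<gamma>) = busemann \<gamma> \<and>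
              horofunction x0 (busemann \<gamma>) \<and>
              (\<forall>x. busemann \<gamma> (g x) = busemann \<gamma> x - translation_length g) \<and>
              (\<forall>h. horofunction x0 h \<and> (\<forall>x. h (g x) = h x - translation_length g)
                   \<longrightarrow> h = busemann \<gamma>) \<and>
              (\<lambda>n. dist ((g ^^ n) x0) (\<gamma> (translation_length g * real n)) / real n)
                 \<longlonglongrightarrow> 0)"
proof -
  interpret KMset x0 g using assms by unfold_locales
  show ?thesis by (rule main)
qed


end
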